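(* Let $t$ be the unique real root of $t\,(2\log t+1/2)=2\log 2-1/2$ and $c=1+1/t$. Then there is a function $\varepsilon(n)=o(n)$ such that every integer-valued polynomial $f$ of degree $n\ge1$ satisfies $E(f)\le cn+\varepsilon(n)$.
   Context: A polynomial $f\in\mathbb{Q}[x]$ is integer-valued if $f(m)\in\mathbb{Z}$ for every $m\in\mathbb{Z}$. $E(f)=\#\{m\in\mathbb{Z}: |f(m)|=1\}$. *)

theory Defs
  imports "HOL-Computational_Algebra.Polynomial" "HOL-Library.Landau_Symbols"
begin

definition int_valued :: "rat poly \<Rightarrow> bool" where
  "int_valued f \<longleftrightarrow> (\<forall>m::int. poly f (of_int m) \<in> \<int>)"

definition E :: "rat poly \<Rightarrow> nat" where
  "E f = card {m::int. \<bar>poly f (of_int m)\<bar> = 1}"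

definition t_const :: real where
  "t_const = (THE t. t > 0 \<and> t * (2 * ln t + 1/2) = 2 * ln 2 - 1/2)"

definition c_const :: real where
  "c_const = 1 + 1 / t_const"

end

theory Submission
  imports Defs "HOL-Analysis.Analysis" "HOL-Real_Asymp.Real_Asymp"
begin

lemma lagrange_coeff:
  fixes p :: "'a::field poly" and X :: "'a set"
  assumes fin: "finite X" and cX: "card X = Suc n" and dp: "degree p \<le> n"
  shows "coeff p n = (\<Sum>x\<in>X. poly p x / (\<Prod>y\<in>X-{x}. (x - y)))"
proof -
  define b where "b x = (\<Prod>y\<in>X-{x}. [:-y,1:])" for x
  define w where "w x = poly p x / (\<Prod>y\<in>X-{x}. (x - y))" for x
  define q where "q = (\<Sum>x\<in>X. smult (w x) (b x))"
  have cardrem: "card (X - {x}) = n" if "x \<in> X" for x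
    using that fin cX by simp
  have degb: "degree (b x) = n" if "x \<in> X" for x
  proof -
    have "degree (b x) = (\<Sum>y\<in>X-{x}. degree [:-y,1:])"
      unfolding b_def by (rule degree_prod_eq_sum_degree) auto
    also have "\<dots> = card (X - {x})" by simp
    finally show ?thesis using cardrem[OF that] by simp
  qed
  have coeffb: "coeff (b x) n = 1" if "x \<in> X" for x
  proof -
    have "lead_coeff (b x) = (\<Prod>y\<in>X-{x}. lead_coeff [:-y,1:])"
      unfolding b_def by (rule lead_coeff_prod)
    also have "\<dots> = 1" by simp
    finally show ?thesis using degb[OF that] by simp
  qed
  have polyb: "poly (b x) z = (\<Prod>y\<in>X-{x}. (z - y))" for x z
    unfolding b_def by (simp add: poly_prod)
  have polyb0: "poly (b x) z = 0" if "x \<in> X" "z \<in> X" "z \<noteq> x" for x z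
    unfolding polyb using that fin by (intro prod_zero) auto
  have polyq: "poly q z = poly p z" if "z \<in> X" for z
  proof -
    have "poly q z = (\<Sum>x\<in>X. w x * poly (b x) z)"
      unfolding q_def by (simp add: poly_sum)
    also have "\<dots> = w z * poly (b z) z + (\<Sum>x\<in>X-{z}. w x * poly (b x) z)"
      using fin that by (simp add: sum.remove)
    also have "(\<Sum>x\<in>X-{z}. w x * poly (b x) z) = 0"
      using that by (intro sum.neutral) (auto simp: polyb0)
    also have "w z * poly (b z) z = poly p z"
    proof -
      have "(\<Prod>y\<in>X-{z}. (z - y)) \<noteq> 0" using fin by (subst prod_zero_iff) auto
      thus ?thesis unfolding w_def polyb by simp
    qed
    finally show ?thesis by simp
  qed
  have degq: "degree q \<le> n"
    unfolding q_def
    by (rule degree_sum_le) (use fin in \<open>auto intro: order.trans[OF degree_smult_le] simp: degb\<close>)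
  have "p - q = 0"
  proof (rule ccontr)
    assume nz: "p - q \<noteq> 0"
    have sub: "X \<subseteq> {x. poly (p - q) x = 0}" using polyq by auto
    have "card X \<le> card {x. poly (p - q) x = 0}"
      by (rule card_mono[OF poly_roots_finite[OF nz] sub])
    also have "\<dots> \<le> degree (p - q)" by (rule card_poly_roots_bound[OF nz])
    also have "\<dots> \<le> n" using dp degq by (meson degree_diff_le)
    finally show False using cX by simp
  qed
  hence "p = q" by simp
  hence "coeff p n = (\<Sum>x\<in>X. w x * coeff (b x) n)"
    by (simp add: q_def coeff_sum)
  also have "\<dots> = (\<Sum>x\<in>X. w x)" by (intro sum.cong) (auto simp: coeffb)
  finally show ?thesis unfolding w_def .
qed

lemma ln_conc:
  fixes a b al :: real
  assumes "0 \<le> al" "al \<le> 1" "a > 0" "b > 0"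
  shows "(1 - al) * ln a + al * ln b \<le> ln ((1 - al) * a + al * b)"
proof -
  have "a \<in> {0<..}" "b \<in> {0<..}" using assms by auto
  thus ?thesis using ln_concave assms unfolding concave_on_iff
    by (metis diff_ge_0_iff_ge le_add_diff_inverse2 real_scaleR_def)
qed

lemma prod_lessThan_dist: "(\<Prod>q<p. real (p - q)) = fact p"
proof (induction p)
  case 0 then show ?case by simp
next
  case (Suc p)
  have "(\<Prod>q<Suc p. real (Suc p - q)) = real (Suc p - 0) * (\<Prod>q<p. real (Suc p - Suc q))"
    by (rule prod.lessThan_Suc_shift)
  also have "(\<Prod>q<p. real (Suc p - Suc q)) = fact p" using Suc by simp
  finally show ?case by (simp add: fact_Suc)
qed

lemma prod_greater_dist: "(\<Prod>q\<in>{p<..<p+k+1}. real (q - p)) = fact k"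
proof (induction k)
  case 0 then show ?case by simp
next
  case (Suc k)
  have "{p<..<p + Suc k + 1} = insert (p+k+1) {p<..<p+k+1}" by auto
  hence "(\<Prod>q\<in>{p<..<p + Suc k + 1}. real (q - p)) = real (p+k+1-p) * (\<Prod>q\<in>{p<..<p+k+1}. real (q - p))"
    by simp
  also have "\<dots> = fact (Suc k)" using Suc by (simp add: fact_Suc)
  finally show ?case .
qed

lemma prod_dist_nat:
  assumes "p < s"
  shows "(\<Prod>q\<in>{..<s}-{p}. real (nat \<bar>int p - int q\<bar>)) = fact p * fact (s - 1 - p)"
proof -
  have split: "{..<s}-{p} = {..<p} \<union> {p<..<p + (s-1-p) + 1}" using assms by auto
  have "(\<Prod>q\<in>{..<s}-{p}. real (nat \<bar>int p - int q\<bar>)) =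
        (\<Prod>q\<in>{..<p}. real (nat \<bar>int p - int q\<bar>)) * (\<Prod>q\<in>{p<..<p + (s-1-p) + 1}. real (nat \<bar>int p - int q\<bar>))"
    unfolding split by (rule prod.union_disjoint) auto
  also have "(\<Prod>q\<in>{..<p}. real (nat \<bar>int p - int q\<bar>)) = (\<Prod>q<p. real (p - q))"
    by (intro prod.cong) auto
  also have "(\<Prod>q\<in>{p<..<p + (s-1-p) + 1}. real (nat \<bar>int p - int q\<bar>)) = (\<Prod>q\<in>{p<..<p + (s-1-p) + 1}. real (q - p))"
    by (intro prod.cong) auto
  also have "(\<Prod>q<p. real (p - q)) * (\<Prod>q\<in>{p<..<p + (s-1-p) + 1}. real (q - p)) = fact p * fact (s - 1 - p)"
    by (simp only: prod_lessThan_dist prod_greater_dist)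
  finally show ?thesis .
qed

lemma block_inner_prod:
  fixes x0 :: int and g s p :: nat
  assumes "g > 0" "p < s"
  shows "(\<Prod>y\<in>(\<lambda>q. x0 + int g * int q) ` {..<s} - {x0 + int g * int p}. real_of_int \<bar>x0 + int g * int p - y\<bar>)
         = real g ^ (s - 1) * fact p * fact (s - 1 - p)"
proof -
  let ?f = "\<lambda>q. x0 + int g * int q"
  have inj: "inj ?f" using assms by (auto simp: inj_def)
  have img: "?f ` {..<s} - {?f p} = ?f ` ({..<s} - {p})" using inj by (auto simp: inj_def)
  have "(\<Prod>y\<in>?f ` ({..<s} - {p}). real_of_int \<bar>?f p - y\<bar>) = (\<Prod>q\<in>{..<s} - {p}. real_of_int \<bar>?f p - ?f q\<bar>)"
  proof -
    have "inj_on ?f ({..<s}-{p})" using inj by (rule inj_on_subset) auto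
    from prod.reindex[OF this] show ?thesis unfolding o_def .
  qed
  also have "\<dots> = (\<Prod>q\<in>{..<s} - {p}. real g * real (nat \<bar>int p - int q\<bar>))"
  proof (intro prod.cong refl)
    fix q assume "q \<in> {..<s} - {p}"
    have "\<bar>?f p - ?f q\<bar> = int g * \<bar>int p - int q\<bar>"
      by (simp add: abs_mult right_diff_distrib[symmetric])
    thus "real_of_int \<bar>?f p - ?f q\<bar> = real g * real (nat \<bar>int p - int q\<bar>)" by simp
  qed
  also have "\<dots> = real g ^ card ({..<s} - {p}) * (\<Prod>q\<in>{..<s} - {p}. real (nat \<bar>int p - int q\<bar>))"
    by (simp add: prod.distrib)
  also have "card ({..<s} - {p}) = s - 1" using assms by simp
  finally show ?thesis using prod_dist_nat[OF assms(2)] img by simp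
qed

lemma block_sum_bound:
  fixes T :: "int set" and x0 :: int and g s :: nat and lam :: real
  assumes fin: "finite T" and BT: "(\<lambda>q. x0 + int g * int q) ` {..<s} \<subseteq> T" and g: "g > 0" and s: "s \<ge> 2"
    and out: "\<forall>y\<in>T - (\<lambda>q. x0 + int g * int q) ` {..<s}. y < x0 \<or> x0 + int g * int (s-1) < y"
    and lam: "0 < lam" "lam < 1"
  shows "(\<Sum>x\<in>(\<lambda>q. x0 + int g * int q) ` {..<s}. 1 / (\<Prod>y\<in>T-{x}. real_of_int \<bar>x - y\<bar>))
    \<le> 1 / (real g ^ (s-1) * fact (s-1)) * ((1/lam)^(s-1) / (\<Prod>y\<in>T - (\<lambda>q. x0 + int g * int q) ` {..<s}. real_of_int \<bar>x0 - y\<bar>)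
        + (1/(1-lam))^(s-1) / (\<Prod>y\<in>T - (\<lambda>q. x0 + int g * int q) ` {..<s}. real_of_int \<bar>x0 + int g * int (s-1) - y\<bar>))"
proof -
  define f where "f = (\<lambda>q::nat. x0 + int g * int q)"
  define B where "B = f ` {..<s}"
  define C where "C = T - B"
  define m where "m = s - 1"
  define xR where "xR = x0 + int g * int m"
  define YL where "YL = (\<Prod>y\<in>C. real_of_int \<bar>x0 - y\<bar>)"
  define YR where "YR = (\<Prod>y\<in>C. real_of_int \<bar>xR - y\<bar>)"
  define u where "u = exp (- ln YL / real m)"
  define v where "v = exp (- ln YR / real m)"
  have sm: "s = Suc m" and m1: "m \<ge> 1" using s by (auto simp: m_def)
  have finC: "finite C" using fin by (simp add: C_def)
  have outC: "y < x0 \<or> xR < y" if "y \<in> C" for y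
    using out that by (auto simp: C_def B_def f_def xR_def m_def)
  have x0R: "x0 \<le> xR" by (simp add: xR_def)
  have YLpos: "YL > 0" unfolding YL_def
    by (rule prod_pos) (use outC x0R in \<open>fastforce\<close>)
  have YRpos: "YR > 0" unfolding YR_def
    by (rule prod_pos) (use outC x0R in \<open>fastforce\<close>)
  have um: "u ^ m = 1 / YL"
  proof -
    have "u ^ m = exp (real m * (- ln YL / real m))" unfolding u_def by (simp only: exp_of_nat_mult)
    also have "\<dots> = exp (- ln YL)" using m1 by simp
    also have "\<dots> = 1 / YL" using YLpos by (simp add: exp_minus inverse_eq_divide)
    finally show ?thesis .
  qed
  have vm: "v ^ m = 1 / YR"
  proof -
    have "v ^ m = exp (real m * (- ln YR / real m))" unfolding v_def by (simp only: exp_of_nat_mult)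
    also have "\<dots> = exp (- ln YR)" using m1 by simp
    also have "\<dots> = 1 / YR" using YRpos by (simp add: exp_minus inverse_eq_divide)
    finally show ?thesis .
  qed
  have upos: "u > 0" and vpos: "v > 0" by (auto simp: u_def v_def)
  have injf: "inj f" using g by (auto simp: inj_def f_def)
  have key: "1 / (\<Prod>y\<in>T-{f p}. real_of_int \<bar>f p - y\<bar>) \<le> 1 / (real g ^ m * fact p * fact (m - p)) * (u ^ (m - p) * v ^ p)"
    if pm: "p \<le> m" for p
  proof -
    define th where "th = real p / real m"
    have th0: "0 \<le> th" and th1: "th \<le> 1" using pm m1 by (auto simp: th_def)
    have fpB: "f p \<in> B" using pm sm by (auto simp: B_def)
    have BsubT: "B \<subseteq> T" using BT by (simp add: B_def f_def)
    have split: "T - {f p} = (B - {f p}) \<union> C" using BsubT fpB by (auto simp: C_def)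
    have finB: "finite B" by (simp add: B_def)
    have P1: "(\<Prod>y\<in>T-{f p}. real_of_int \<bar>f p - y\<bar>) = (\<Prod>y\<in>B-{f p}. real_of_int \<bar>f p - y\<bar>) * (\<Prod>y\<in>C. real_of_int \<bar>f p - y\<bar>)"
      unfolding split by (rule prod.union_disjoint) (use finB finC in \<open>auto simp: C_def\<close>)
    have P2: "(\<Prod>y\<in>B-{f p}. real_of_int \<bar>f p - y\<bar>) = real g ^ m * fact p * fact (m - p)"
    proof -
      have "p < s" using pm sm by simp
      from block_inner_prod[OF g this, of x0] show ?thesis unfolding B_def f_def m_def .
    qed
    have fpreal: "real_of_int (f p) = (1 - th) * real_of_int x0 + th * real_of_int xR"
      using m1 by (simp add: f_def xR_def th_def field_simps)
    have each: "(1 - th) * ln (real_of_int \<bar>x0 - y\<bar>) + th * ln (real_of_int \<bar>xR - y\<bar>) \<le> ln (real_of_int \<bar>f p - y\<bar>)"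
      if yC: "y \<in> C" for y
    proof -
      have pos1: "real_of_int \<bar>x0 - y\<bar> > 0" and pos2: "real_of_int \<bar>xR - y\<bar> > 0"
        using outC[OF yC] x0R by auto
      have eq: "real_of_int \<bar>f p - y\<bar> = (1 - th) * real_of_int \<bar>x0 - y\<bar> + th * real_of_int \<bar>xR - y\<bar>"
      proof (cases "y < x0")
        case True
        moreover have "x0 \<le> f p" by (simp add: f_def)
        ultimately have "f p > y" by simp
        thus ?thesis using True x0R fpreal by (simp add: algebra_simps)
      next
        case False
        hence "xR < y" using outC[OF yC] by simp
        moreover have "f p \<le> xR" using pm g by (simp add: f_def xR_def mult_left_mono)
        ultimately show ?thesis using x0R fpreal by (simp add: algebra_simps)
      qed
      show ?thesis unfolding eq by (rule ln_conc[OF th0 th1 pos1 pos2])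
    qed
    have lnO: "(1 - th) * ln YL + th * ln YR \<le> ln (\<Prod>y\<in>C. real_of_int \<bar>f p - y\<bar>)"
    proof -
      have "(1 - th) * ln YL + th * ln YR = (\<Sum>y\<in>C. (1 - th) * ln (real_of_int \<bar>x0 - y\<bar>) + th * ln (real_of_int \<bar>xR - y\<bar>))"
        unfolding YL_def YR_def using outC x0R
        by (subst ln_prod, use finC in simp, fastforce)+ (simp add: sum.distrib sum_distrib_left)
      also have "\<dots> \<le> (\<Sum>y\<in>C. ln (real_of_int \<bar>f p - y\<bar>))" by (rule sum_mono) (rule each)
      also have "\<dots> = ln (\<Prod>y\<in>C. real_of_int \<bar>f p - y\<bar>)"
      proof -
        have "real_of_int \<bar>f p - y\<bar> > 0" if "y \<in> C" for y
        proof -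
          have "f p \<noteq> y" using that fpB by (auto simp: C_def)
          thus ?thesis by simp
        qed
        thus ?thesis by (subst ln_prod) (use finC in auto)
      qed
      finally show ?thesis .
    qed
    have Opos: "(\<Prod>y\<in>C. real_of_int \<bar>f p - y\<bar>) > 0"
    proof (rule prod_pos)
      fix y assume "y \<in> C"
      hence "f p \<noteq> y" using fpB by (auto simp: C_def)
      thus "real_of_int \<bar>f p - y\<bar> > 0" by simp
    qed
    have uv: "u ^ (m - p) * v ^ p = exp (- ((1 - th) * ln YL + th * ln YR))"
    proof -
      have "u ^ (m - p) = exp (real (m - p) * (- ln YL / real m))" unfolding u_def by (simp only: exp_of_nat_mult)
      moreover have "v ^ p = exp (real p * (- ln YR / real m))" unfolding v_def by (simp only: exp_of_nat_mult)
      moreover have "real (m - p) * (- ln YL / real m) + real p * (- ln YR / real m) = - ((1 - th) * ln YL + th * ln YR)"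
        using pm m1 by (simp add: th_def of_nat_diff field_simps)
      ultimately show ?thesis by (simp flip: exp_add)
    qed
    have "1 / (\<Prod>y\<in>C. real_of_int \<bar>f p - y\<bar>) \<le> u ^ (m - p) * v ^ p"
    proof -
      have "exp ((1 - th) * ln YL + th * ln YR) \<le> (\<Prod>y\<in>C. real_of_int \<bar>f p - y\<bar>)"
        using lnO Opos by (metis exp_le_cancel_iff exp_ln)
      hence "1 / (\<Prod>y\<in>C. real_of_int \<bar>f p - y\<bar>) \<le> 1 / exp ((1 - th) * ln YL + th * ln YR)"
        by (rule divide_left_mono) (use Opos in \<open>auto intro!: mult_pos_pos\<close>)
      thus ?thesis unfolding uv by (simp only: exp_minus inverse_eq_divide)
    qed
    hence O1: "1 / (\<Prod>y\<in>C. real_of_int \<bar>f p - y\<bar>) \<le> u ^ (m - p) * v ^ p" .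
    have Gpos: "real g ^ m * fact p * fact (m - p) > 0" using g by simp
    have "1 / (\<Prod>y\<in>T-{f p}. real_of_int \<bar>f p - y\<bar>) = 1 / (real g ^ m * fact p * fact (m - p)) * (1 / (\<Prod>y\<in>C. real_of_int \<bar>f p - y\<bar>))"
      unfolding P1 P2 by simp
    also have "\<dots> \<le> 1 / (real g ^ m * fact p * fact (m - p)) * (u ^ (m - p) * v ^ p)"
      by (rule mult_left_mono[OF O1]) (use Gpos in simp)
    finally show ?thesis .
  qed
  have "(\<Sum>x\<in>B. 1 / (\<Prod>y\<in>T-{x}. real_of_int \<bar>x - y\<bar>)) = (\<Sum>p\<in>{..m}. 1 / (\<Prod>y\<in>T-{f p}. real_of_int \<bar>f p - y\<bar>))"
  proof -
    have "{..<s} = {..m}" using sm by auto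
    moreover have "inj_on f {..m}" using injf by (rule inj_on_subset) auto
    ultimately show ?thesis unfolding B_def by (simp add: sum.reindex)
  qed
  also have "\<dots> \<le> (\<Sum>p\<in>{..m}. 1 / (real g ^ m * fact p * fact (m - p)) * (u ^ (m - p) * v ^ p))"
    by (rule sum_mono) (use key in auto)
  also have "\<dots> = 1 / (real g ^ m * fact m) * (\<Sum>p\<in>{..m}. of_nat (m choose p) * v ^ p * u ^ (m - p))"
    by (subst sum_distrib_left, rule sum.cong) (auto simp: binomial_fact field_simps)
  also have "(\<Sum>p\<in>{..m}. of_nat (m choose p) * v ^ p * u ^ (m - p)) = (v + u) ^ m"
    by (simp add: binomial_ring)
  also have "(v + u) ^ m \<le> (1/lam) ^ m * u ^ m + (1/(1-lam)) ^ m * v ^ m"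
  proof -
    define Mx where "Mx = max (u / lam) (v / (1 - lam))"
    have "v + u = lam * (u / lam) + (1 - lam) * (v / (1 - lam))" using lam by simp
    also have "\<dots> \<le> lam * Mx + (1 - lam) * Mx"
      using lam by (intro add_mono mult_left_mono) (auto simp: Mx_def)
    finally have "v + u \<le> Mx" by (simp add: algebra_simps)
    hence "(v + u) ^ m \<le> Mx ^ m" using upos vpos by (intro power_mono) auto
    also have "Mx ^ m \<le> (u / lam) ^ m + (v / (1 - lam)) ^ m"
      using upos vpos lam by (auto simp: Mx_def max_def)
    also have "\<dots> = (1/lam) ^ m * u ^ m + (1/(1-lam)) ^ m * v ^ m" by (simp add: power_divide)
    finally show ?thesis .
  qed
  finally have "(\<Sum>x\<in>B. 1 / (\<Prod>y\<in>T-{x}. real_of_int \<bar>x - y\<bar>)) \<le> 1 / (real g ^ m * fact m) * ((1/lam) ^ m * u ^ m + (1/(1-lam)) ^ m * v ^ m)"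
    using g by (simp add: divide_right_mono mult_left_mono)
  thus ?thesis unfolding um vm by (simp add: B_def f_def C_def YL_def YR_def xR_def m_def)
qed

lemma exp_ge_term:
  fixes x :: real assumes "0 \<le> x"
  shows "x ^ n / fact n \<le> exp x"
proof -
  have s: "(\<lambda>k. x ^ k /\<^sub>R fact k) sums exp x" by (rule exp_converges)
  have "sum (\<lambda>k. x ^ k /\<^sub>R fact k) {n} \<le> suminf (\<lambda>k. x ^ k /\<^sub>R fact k)"
    by (rule sum_le_suminf) (use s assms in \<open>auto simp: sums_iff\<close>)
  thus ?thesis using s by (simp add: sums_iff divide_inverse mult.commute)
qed

lemma lnfact_lower:
  assumes "k \<ge> 1"
  shows "real k * ln (real k) - real k \<le> ln (fact k)"
proof -
  have "real k ^ k / fact k \<le> exp (real k)" by (rule exp_ge_term) simp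
  hence "ln (real k ^ k / fact k) \<le> ln (exp (real k))"
    using assms by (subst ln_le_cancel_iff) auto
  hence "ln (real k ^ k / fact k) \<le> real k" by simp
  moreover have "ln (real k ^ k / fact k) = real k * ln (real k) - ln (fact k)"
    using assms by (simp add: ln_div ln_realpow)
  ultimately show ?thesis by simp
qed

lemma lnfact_upper:
  assumes "k \<ge> 1"
  shows "ln (fact k) \<le> (real k + 1) * ln (real k) - real k + 1"
  using assms
proof (induction k rule: dec_induct)
  case base then show ?case by simp
next
  case (step k)
  have k1: "real k \<ge> 1" using step by simp
  have "ln (fact (Suc k)) = ln (real (Suc k)) + ln (fact k)"
    by (simp add: fact_Suc ln_mult)
  also have "\<dots> \<le> ln (real (Suc k)) + ((real k + 1) * ln (real k) - real k + 1)"
    using step by simp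
  also have "\<dots> \<le> (real (Suc k) + 1) * ln (real (Suc k)) - real (Suc k) + 1"
  proof -
    have "1 / (real k + 1) \<le> ln (1 / real k + 1)"
      using ln_add1_ge[of "1 / real k"] k1 by (simp add: field_simps)
    also have "ln (1 / real k + 1) = ln (real k + 1) - ln (real k)"
    proof -
      have "1 / real k + 1 = (real k + 1) / real k" using k1 by (simp add: field_simps)
      thus ?thesis using k1 by (simp add: ln_div)
    qed
    finally have "1 \<le> (real k + 1) * (ln (real k + 1) - ln (real k))"
      using k1 by (simp add: field_simps)
    thus ?thesis by (simp add: algebra_simps)
  qed
  finally show ?case .
qed

lemma ln1p_lower:
  fixes x :: real assumes x: "0 \<le> x"
  shows "x - x^2/2 + x^3/3 - x^4/4 \<le> ln (1 + x)"
proof -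
  define f where "f t = ln (1 + t) - (t - t^2/2 + t^3/3 - t^4/4)" for t :: real
  have d: "(f has_real_derivative (t^4 / (1 + t))) (at t)" if "t \<ge> 0" for t
  proof -
    have "(f has_real_derivative (1 / (1 + t) - (1 - t + t^2 - t^3))) (at t)"
      unfolding f_def using that by (auto intro!: derivative_eq_intros simp: power2_eq_square field_simps)
    moreover have "1 / (1 + t) - (1 - t + t^2 - t^3) = t^4 / (1 + t)"
      using that by (simp add: field_simps power2_eq_square power3_eq_cube power4_eq_xxxx)
    ultimately show ?thesis by simp
  qed
  have "f 0 \<le> f x"
  proof (rule DERIV_nonneg_imp_increasing_open[OF x])
    fix t assume "0 < t" "t < x"
    thus "\<exists>y. (f has_real_derivative y) (at t) \<and> 0 \<le> y" using d by (intro exI[of _ "t^4/(1+t)"]) auto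
  next
    show "continuous_on {0..x} f" unfolding f_def by (intro continuous_intros) auto
  qed
  thus ?thesis by (simp add: f_def)
qed

lemma ln1p_upper:
  fixes x :: real assumes x: "0 \<le> x"
  shows "ln (1 + x) \<le> x - x^2/2 + x^3/3 - x^4/4 + x^5/5"
proof -
  define f where "f t = (t - t^2/2 + t^3/3 - t^4/4 + t^5/5) - ln (1 + t)" for t :: real
  have d: "(f has_real_derivative (t^5 / (1 + t))) (at t)" if "t \<ge> 0" for t
  proof -
    have "(f has_real_derivative ((1 - t + t^2 - t^3 + t^4) - 1 / (1 + t))) (at t)"
      unfolding f_def using that by (auto intro!: derivative_eq_intros simp: power2_eq_square field_simps)
    moreover have "(1 - t + t^2 - t^3 + t^4) - 1 / (1 + t) = t^5 / (1 + t)"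
      using that by (simp add: field_simps power2_eq_square power3_eq_cube power4_eq_xxxx) (simp add: algebra_simps power_def)
    ultimately show ?thesis by simp
  qed
  have "f 0 \<le> f x"
  proof (rule DERIV_nonneg_imp_increasing_open[OF x])
    fix t assume "0 < t" "t < x"
    thus "\<exists>y. (f has_real_derivative y) (at t) \<and> 0 \<le> y" using d by (intro exI[of _ "t^5/(1+t)"]) auto
  next
    show "continuous_on {0..x} f" unfolding f_def by (intro continuous_intros) auto
  qed
  thus ?thesis by (simp add: f_def)
qed

lemma lnfact_up_mult:
  assumes "a \<ge> 1" "M \<ge> 1"
  shows "ln (fact (a * M)) \<le> real M * (real a * ln (real a)) + (real M * ln (real M) - real M) * real a + (ln (real M) + 1) + ln (real a)"
proof -
  have "a * M \<ge> 1" using assms by simp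
  from lnfact_upper[OF this] have "ln (fact (a * M)) \<le> (real (a * M) + 1) * ln (real (a * M)) - real (a * M) + 1" .
  also have "ln (real (a * M)) = ln (real a) + ln (real M)" using assms by (simp add: ln_mult)
  finally show ?thesis by (simp add: algebra_simps)
qed

lemma lnfact_lo_mult:
  assumes "a \<ge> 1" "M \<ge> 1"
  shows "real M * (real a * ln (real a)) + (real M * ln (real M) - real M) * real a \<le> ln (fact (a * M))"
proof -
  have "a * M \<ge> 1" using assms by simp
  from lnfact_lower[OF this] have "real (a * M) * ln (real (a * M)) - real (a * M) \<le> ln (fact (a * M))" .
  moreover have "ln (real (a * M)) = ln (real a) + ln (real M)" using assms by (simp add: ln_mult)
  ultimately show ?thesis by (simp add: algebra_simps)
qed

lemma prod_list_fact_pos: "(0::real) < prod_list (map (\<lambda>a. fact (a * M)) as)"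
  by (induction as) auto

lemma lnprod_up:
  assumes "\<forall>a\<in>set as. a \<ge> 1" "M \<ge> 1"
  shows "ln (prod_list (map (\<lambda>a. fact (a * M)) as) :: real) \<le> real M * sum_list (map (\<lambda>a. real a * ln (real a)) as)
     + (real M * ln (real M) - real M) * real (sum_list as) + real (length as) * (ln (real M) + 1) + sum_list (map (\<lambda>a. ln (real a)) as)"
  using assms(1)
proof (induction as)
  case Nil then show ?case by simp
next
  case (Cons a as)
  have a1: "a \<ge> 1" using Cons by simp
  have "ln (prod_list (map (\<lambda>a. fact (a * M)) (a # as)) :: real) = ln (fact (a * M)) + ln (prod_list (map (\<lambda>a. fact (a * M)) as))"
    by (simp only: list.map prod_list.Cons) (rule ln_mult_pos, simp, rule prod_list_fact_pos)
  also have "\<dots> \<le> (real M * (real a * ln (real a)) + (real M * ln (real M) - real M) * real a + (ln (real M) + 1) + ln (real a))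
     + (real M * sum_list (map (\<lambda>a. real a * ln (real a)) as)
     + (real M * ln (real M) - real M) * real (sum_list as) + real (length as) * (ln (real M) + 1) + sum_list (map (\<lambda>a. ln (real a)) as))"
    using lnfact_up_mult[OF a1 assms(2)] Cons by (intro add_mono) auto
  finally show ?case by (simp add: algebra_simps)
qed

lemma lnprod_lo:
  assumes "\<forall>a\<in>set as. a \<ge> 1" "M \<ge> 1"
  shows "real M * sum_list (map (\<lambda>a. real a * ln (real a)) as) + (real M * ln (real M) - real M) * real (sum_list as)
     \<le> ln (prod_list (map (\<lambda>a. fact (a * M)) as) :: real)"
  using assms(1)
proof (induction as)
  case Nil then show ?case by simp
next
  case (Cons a as)
  have a1: "a \<ge> 1" using Cons by simp
  have "(real M * (real a * ln (real a)) + (real M * ln (real M) - real M) * real a)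
     + (real M * sum_list (map (\<lambda>a. real a * ln (real a)) as) + (real M * ln (real M) - real M) * real (sum_list as))
     \<le> ln (fact (a * M)) + ln (prod_list (map (\<lambda>a. fact (a * M)) as) :: real)"
    using lnfact_lo_mult[OF a1 assms(2)] Cons by (intro add_mono) auto
  also have "\<dots> = ln (prod_list (map (\<lambda>a. fact (a * M)) (a # as)) :: real)"
    by (simp only: list.map prod_list.Cons) (rule ln_mult_pos[symmetric], simp, rule prod_list_fact_pos)
  finally show ?case by (simp add: algebra_simps)
qed

lemma stirling_ratio:
  fixes as bs :: "nat list" and M :: nat
  assumes "M \<ge> 1" "\<forall>a\<in>set as. a \<ge> 1" "\<forall>b\<in>set bs. b \<ge> 1" "sum_list as = sum_list bs"
  shows "ln (prod_list (map (\<lambda>a. fact (a * M)) as) / prod_list (map (\<lambda>b. fact (b * M)) bs) :: real)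
    \<le> real M * (sum_list (map (\<lambda>a. real a * ln (real a)) as) - sum_list (map (\<lambda>b. real b * ln (real b)) bs))
       + real (length as) * (ln (real M) + 1) + sum_list (map (\<lambda>a. ln (real a)) as)"
proof -
  have "ln (prod_list (map (\<lambda>a. fact (a * M)) as) / prod_list (map (\<lambda>b. fact (b * M)) bs) :: real)
      = ln (prod_list (map (\<lambda>a. fact (a * M)) as) :: real) - ln (prod_list (map (\<lambda>b. fact (b * M)) bs) :: real)"
    by (rule ln_divide_pos) (rule prod_list_fact_pos)+
  thus ?thesis using lnprod_up[OF assms(2,1)] lnprod_lo[OF assms(3,1)] assms(4) by (simp add: algebra_simps)
qed

lemma ln_r_bounds:
  fixes x :: real assumes "0 \<le> x"
  shows "x - x^2/2 + x^3/3 - x^4/4 \<le> ln (1 + x) \<and> ln (1 + x) \<le> x - x^2/2 + x^3/3 - x^4/4 + x^5/5"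
  using ln1p_lower[OF assms] ln1p_upper[OF assms] by simp

lemma ln_comp:
  "ln (4::real) = 2 * ln 2" "ln (8::real) = 3 * ln 2" "ln (16::real) = 4 * ln 2"
  "ln (9::real) = 2 * ln 3" "ln (27::real) = 3 * ln 3" "ln (81::real) = 4 * ln 3"
  "ln (25::real) = 2 * ln 5" "ln (49::real) = 2 * ln 7" "ln (121::real) = 2 * ln 11"
  "ln (15::real) = ln 3 + ln 5" "ln (24::real) = 3 * ln 2 + ln 3"
  "ln (80::real) = 4 * ln 2 + ln 5" "ln (50::real) = ln 2 + 2 * ln 5"
  "ln (120::real) = 3 * ln 2 + ln 3 + ln 5" "ln (144::real) = 4 * ln 2 + 2 * ln 3"
  "ln (143::real) = ln 11 + ln 13"
  "ln (12::real) = 2 * ln 2 + ln 3" "ln (18::real) = ln 2 + 2 * ln 3"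
  "ln (22::real) = ln 2 + ln 11" "ln (39::real) = ln 3 + ln 13"
  "ln (42::real) = ln 2 + ln 3 + ln 7" "ln (54::real) = ln 2 + 3 * ln 3"
  "ln (66::real) = ln 2 + ln 3 + ln 11" "ln (78::real) = ln 2 + ln 3 + ln 13"
  "ln (6::real) = ln 2 + ln 3"
  using ln_realpow[of "2::real" 2] ln_realpow[of "2::real" 3] ln_realpow[of "2::real" 4]
    ln_realpow[of "3::real" 2] ln_realpow[of "3::real" 3] ln_realpow[of "3::real" 4]
    ln_realpow[of "5::real" 2] ln_realpow[of "7::real" 2] ln_realpow[of "11::real" 2]
    ln_mult_pos[of "3::real" 5] ln_mult_pos[of "8::real" 3] ln_mult_pos[of "16::real" 5]
    ln_mult_pos[of "2::real" 25] ln_mult_pos[of "24::real" 5] ln_mult_pos[of "16::real" 9]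
    ln_mult_pos[of "11::real" 13] ln_mult_pos[of "4::real" 3] ln_mult_pos[of "2::real" 9]
    ln_mult_pos[of "2::real" 11] ln_mult_pos[of "3::real" 13] ln_mult_pos[of "6::real" 7]
    ln_mult_pos[of "2::real" 27] ln_mult_pos[of "6::real" 11] ln_mult_pos[of "6::real" 13]
    ln_mult_pos[of "2::real" 3]
  by simp_all

lemma ln_ratio_eqs:
  "ln (1 + 1/15 :: real) = ln 16 - ln 15" "ln (1 + 1/24 :: real) = ln 25 - ln 24"
  "ln (1 + 1/80 :: real) = ln 81 - ln 80" "ln (1 + 1/49 :: real) = ln 50 - ln 49"
  "ln (1 + 1/120 :: real) = ln 121 - ln 120" "ln (1 + 1/143 :: real) = ln 144 - ln 143"
  using ln_divide_pos[of "16::real" 15] ln_divide_pos[of "25::real" 24] ln_divide_pos[of "81::real" 80]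
    ln_divide_pos[of "50::real" 49] ln_divide_pos[of "121::real" 120] ln_divide_pos[of "144::real" 143]
  by simp_all

lemma ln_primes_bounds:
  "(693145/1000000) \<le> ln (2::real)" "ln (2::real) \<le> (693148/1000000)"
  "(1098609/1000000) \<le> ln (3::real)" "ln (3::real) \<le> (1098613/1000000)"
  "(1609433/1000000) \<le> ln (5::real)" "ln (5::real) \<le> (1609439/1000000)"
  "(1945904/1000000) \<le> ln (7::real)" "ln (7::real) \<le> (1945911/1000000)"
  "(2397888/1000000) \<le> ln (11::real)" "ln (11::real) \<le> (2397896/1000000)"
  "(2564942/1000000) \<le> ln (13::real)" "ln (13::real) \<le> (2564950/1000000)"
proof -
  have b1: "(645382716/10000000000) \<le> ln (1 + 1/15 :: real)" "ln (1 + 1/15 :: real) \<le> (645385350/10000000000)"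
    using ln_r_bounds[of "1/15"] by (simp_all add: power_divide)
  have b2: "(408219702/10000000000) \<le> ln (1 + 1/24 :: real)" "ln (1 + 1/24 :: real) \<le> (408219954/10000000000)"
    using ln_r_bounds[of "1/24"] by (simp_all add: power_divide)
  have b3: "(124225199/10000000000) \<le> ln (1 + 1/80 :: real)" "ln (1 + 1/80 :: real) \<le> (124225200/10000000000)"
    using ln_r_bounds[of "1/80"] by (simp_all add: power_divide)
  have b4: "(202027066/10000000000) \<le> ln (1 + 1/49 :: real)" "ln (1 + 1/49 :: real) \<le> (202027074/10000000000)"
    using ln_r_bounds[of "1/49"] by (simp_all add: power_divide)
  have b5: "(82988028/10000000000) \<le> ln (1 + 1/120 :: real)" "ln (1 + 1/120 :: real) \<le> (82988029/10000000000)"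
    using ln_r_bounds[of "1/120"] by (simp_all add: power_divide)
  have b6: "(69686693/10000000000) \<le> ln (1 + 1/143 :: real)" "ln (1 + 1/143 :: real) \<le> (69686694/10000000000)"
    using ln_r_bounds[of "1/143"] by (simp_all add: power_divide)
  note e = ln_ratio_eqs ln_comp
  show "(693145/1000000) \<le> ln (2::real)" using b1 b2 b3 e by linarith
  show "ln (2::real) \<le> (693148/1000000)" using b1 b2 b3 e by linarith
  show "(1098609/1000000) \<le> ln (3::real)" using b1 b2 b3 e by linarith
  show "ln (3::real) \<le> (1098613/1000000)" using b1 b2 b3 e by linarith
  show "(1609433/1000000) \<le> ln (5::real)" using b1 b2 b3 e by linarith
  show "ln (5::real) \<le> (1609439/1000000)" using b1 b2 b3 e by linarith
  show "(1945904/1000000) \<le> ln (7::real)" using b1 b2 b3 b4 e by linarith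
  show "ln (7::real) \<le> (1945911/1000000)" using b1 b2 b3 b4 e by linarith
  show "(2397888/1000000) \<le> ln (11::real)" using b1 b2 b3 b5 e by linarith
  show "ln (11::real) \<le> (2397896/1000000)" using b1 b2 b3 b5 e by linarith
  show "(2564942/1000000) \<le> ln (13::real)" using b1 b2 b3 b5 b6 e by linarith
  show "ln (13::real) \<le> (2564950/1000000)" using b1 b2 b3 b5 b6 e by linarith
qed

lemma final_eventually:
  fixes as bs :: "nat list" and r C :: real and k :: nat
  assumes as1: "\<forall>a\<in>set as. a \<ge> 1" and bs1: "\<forall>b\<in>set bs. b \<ge> 1" and sums: "sum_list as = sum_list bs"
    and r: "r > 0" and C: "C > 0"
    and K: "sum_list (map (\<lambda>a. real a * ln (real a)) as) - sum_list (map (\<lambda>b. real b * ln (real b)) bs) + ln r \<le> -1"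
  shows "eventually (\<lambda>M. C * (78 * real M) ^ k * (prod_list (map (\<lambda>a. fact (a * M)) as) / prod_list (map (\<lambda>b. fact (b * M)) bs)) * r ^ M \<le> 1/16) sequentially"
proof -
  define S where "S = sum_list (map (\<lambda>a. ln (real a)) as)"
  define L where "L = length as"
  define D where "D = C * 78 ^ k * exp (S + real L)"
  have lim0: "((\<lambda>x::real. D * (x ^ (k + L) / exp x)) \<longlongrightarrow> 0) at_top"
    by (rule tendsto_mult_right_zero) (rule tendsto_power_div_exp_0)
  have lim: "((\<lambda>M::nat. D * (real M ^ (k + L) / exp (real M))) \<longlongrightarrow> 0) sequentially"
    by (rule filterlim_compose[OF lim0 filterlim_real_sequentially])
  have ev1: "eventually (\<lambda>M::nat. D * (real M ^ (k + L) / exp (real M)) < 1/16) sequentially"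
    using order_tendstoD(2)[OF lim, of "1/16"] by simp
  have ev2: "eventually (\<lambda>M::nat. M \<ge> 1) sequentially" by (rule eventually_ge_at_top)
  show ?thesis
  proof (rule eventually_mono[OF eventually_conj[OF ev1 ev2]])
    fix M :: nat assume H: "D * (real M ^ (k + L) / exp (real M)) < 1/16 \<and> M \<ge> 1"
    hence M1: "M \<ge> 1" by simp
    define Q where "Q = (prod_list (map (\<lambda>a. fact (a * M)) as) / prod_list (map (\<lambda>b. fact (b * M)) bs) :: real)"
    have Qpos: "Q > 0" unfolding Q_def by (intro divide_pos_pos prod_list_fact_pos)
    have lnQ: "ln Q \<le> real M * (sum_list (map (\<lambda>a. real a * ln (real a)) as) - sum_list (map (\<lambda>b. real b * ln (real b)) bs))
       + real L * (ln (real M) + 1) + S"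
      unfolding Q_def L_def S_def by (rule stirling_ratio[OF M1 as1 bs1 sums])
    have "ln (Q * r ^ M) = ln Q + real M * ln r" using Qpos r by (simp add: ln_mult_pos ln_realpow)
    also have "\<dots> \<le> real M * (sum_list (map (\<lambda>a. real a * ln (real a)) as) - sum_list (map (\<lambda>b. real b * ln (real b)) bs) + ln r)
       + real L * (ln (real M) + 1) + S"
      using lnQ by (simp add: algebra_simps)
    also have "\<dots> \<le> real M * (-1) + real L * (ln (real M) + 1) + S"
      using K by (intro add_mono mult_left_mono) auto
    finally have lnb: "ln (Q * r ^ M) \<le> - real M + real L * ln (real M) + (S + real L)" by (simp add: algebra_simps)
    have "Q * r ^ M = exp (ln (Q * r ^ M))" using Qpos r by simp
    also have "\<dots> \<le> exp (- real M + real L * ln (real M) + (S + real L))" using lnb by simp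
    also have "\<dots> = exp (S + real L) * real M ^ L / exp (real M)"
    proof -
      have "exp (real L * ln (real M)) = real M ^ L" using M1 by (simp add: exp_of_nat_mult)
      thus ?thesis by (simp add: exp_add exp_diff exp_minus field_simps)
    qed
    finally have Qb: "Q * r ^ M \<le> exp (S + real L) * real M ^ L / exp (real M)" .
    have "C * (78 * real M) ^ k * Q * r ^ M = C * (78 * real M) ^ k * (Q * r ^ M)" by simp
    also have "\<dots> \<le> C * (78 * real M) ^ k * (exp (S + real L) * real M ^ L / exp (real M))"
      using Qb C by (intro mult_left_mono) auto
    also have "\<dots> = D * (real M ^ (k + L) / exp (real M))"
      by (simp add: D_def power_add power_mult_distrib field_simps)
    finally have X: "C * (78 * real M) ^ k * Q * r ^ M \<le> D * (real M ^ (k + L) / exp (real M))" .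
    have "C * (78 * real M) ^ k * Q * r ^ M \<le> 1/16" using X H by linarith
    thus "C * (78 * real M) ^ k * (prod_list (map (\<lambda>a. fact (a * M)) as) / prod_list (map (\<lambda>b. fact (b * M)) bs)) * r ^ M \<le> 1/16"
      unfolding Q_def .
  qed
qed

lemma ln_r_vals:
  "ln ((4::real)^12 / 3^18) = 24 * ln 2 - 18 * ln 3"
  "ln ((4::real)^12 / 3^30) = 24 * ln 2 - 30 * ln 3"
  "ln ((5::real)^9 / 3^27) = 9 * ln 5 - 27 * ln 3"
  "ln ((5::real)^9 / (2^9 * 3^18)) = 9 * ln 5 - 9 * ln 2 - 18 * ln 3"
proof -
  have l4: "ln (4::real) = 2 * ln 2" by (rule ln_comp(1))
  have "ln ((4::real)^12 / 3^18) = ln ((4::real)^12) - ln (3^18)" by (rule ln_divide_pos) auto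
  also have "\<dots> = 24 * ln 2 - 18 * ln 3" unfolding ln_realpow l4 by simp
  finally show "ln ((4::real)^12 / 3^18) = 24 * ln 2 - 18 * ln 3" .
  have "ln ((4::real)^12 / 3^30) = ln ((4::real)^12) - ln (3^30)" by (rule ln_divide_pos) auto
  also have "\<dots> = 24 * ln 2 - 30 * ln 3" unfolding ln_realpow l4 by simp
  finally show "ln ((4::real)^12 / 3^30) = 24 * ln 2 - 30 * ln 3" .
  have "ln ((5::real)^9 / 3^27) = ln ((5::real)^9) - ln (3^27)" by (rule ln_divide_pos) auto
  also have "\<dots> = 9 * ln 5 - 27 * ln 3" unfolding ln_realpow by simp
  finally show "ln ((5::real)^9 / 3^27) = 9 * ln 5 - 27 * ln 3" .
  have "ln ((5::real)^9 / (2^9 * 3^18)) = ln ((5::real)^9) - ln (2^9 * 3^18)" by (rule ln_divide_pos) auto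
  also have "ln ((2::real)^9 * 3^18) = ln ((2::real)^9) + ln (3^18)" by (rule ln_mult_pos) auto
  also have "ln ((5::real)^9) - (ln ((2::real)^9) + ln (3^18)) = 9 * ln 5 - 9 * ln 2 - 18 * ln 3" unfolding ln_realpow by simp
  finally show "ln ((5::real)^9 / (2^9 * 3^18)) = 9 * ln 5 - 9 * ln 2 - 18 * ln 3" .
qed

lemma K_AL: "sum_list (map (\<lambda>a. real a * ln (real a)) [42,4,66]) - sum_list (map (\<lambda>b. real b * ln (real b)) [12,22,78]) + ln ((4::real)^12 / 3^18) \<le> -1"
  using ln_r_vals ln_comp ln_primes_bounds by simp
lemma K_AR: "sum_list (map (\<lambda>a. real a * ln (real a)) [42,54]) - sum_list (map (\<lambda>b. real b * ln (real b)) [12,18,66]) + ln ((4::real)^12 / 3^30) \<le> -1"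
  using ln_r_vals ln_comp ln_primes_bounds by simp
lemma K_BL: "sum_list (map (\<lambda>a. real a * ln (real a)) [42,54]) - sum_list (map (\<lambda>b. real b * ln (real b)) [12,18,66]) + ln ((5::real)^9 / 3^27) \<le> -1"
  using ln_r_vals ln_comp ln_primes_bounds by simp
lemma K_BR: "sum_list (map (\<lambda>a. real a * ln (real a)) [42,27,27]) - sum_list (map (\<lambda>b. real b * ln (real b)) [9,9,39,39]) + ln ((5::real)^9 / (2^9 * 3^18)) \<le> -1"
  using ln_r_vals ln_comp ln_primes_bounds by simp

definition PP :: "nat \<Rightarrow> nat \<Rightarrow> real" where "PP a b = (\<Prod>k\<in>{a..b}. real k)"

lemma PP_fact:
  assumes "1 \<le> a" "a \<le> b + 1"
  shows "fact b = fact (a - 1) * PP a b"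
  using assms(2)
proof (induction b)
  case 0
  hence "a = 1" using assms(1) by simp
  thus ?case by (simp add: PP_def)
next
  case (Suc b)
  show ?case
  proof (cases "a = Suc b + 1")
    case True
    thus ?thesis by (simp add: PP_def)
  next
    case False
    hence ab: "a \<le> b + 1" using Suc by simp
    have "{a..Suc b} = insert (Suc b) {a..b}" using ab by auto
    hence "PP a (Suc b) = real (Suc b) * PP a b" by (simp add: PP_def)
    thus ?thesis using Suc.IH[OF ab] by (simp add: fact_Suc algebra_simps)
  qed
qed

lemma fact_shift_le:
  assumes "b + j \<le> N"
  shows "(fact (b + j) :: real) \<le> real N ^ j * fact b"
  using assms
proof (induction j)
  case 0 then show ?case by simp
next
  case (Suc j)
  have "(fact (b + Suc j) :: real) = real (Suc (b + j)) * fact (b + j)" by (simp add: fact_Suc)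
  also have "\<dots> \<le> real N * (real N ^ j * fact b)"
    using Suc by (intro mult_mono) auto
  finally show ?case by simp
qed

lemma PP_lower:
  assumes "1 \<le> a" "a \<le> b + 1" "a - 1 \<le> a'" "b' \<le> b + j" "b + j \<le> N"
  shows "fact b' / (real N ^ j * fact a') \<le> PP a b"
proof -
  have f1: "(fact b' :: real) \<le> fact (b + j)" using assms(4) by (rule fact_mono)
  also have "\<dots> \<le> real N ^ j * fact b" using assms(5) by (rule fact_shift_le)
  finally have f2: "(fact b' :: real) \<le> real N ^ j * fact b" .
  have f3: "(fact (a - 1) :: real) \<le> fact a'" using assms(3) by (rule fact_mono)
  have Npos: "real N ^ j > 0"
  proof (cases j)
    case 0 thus ?thesis by simp
  next
    case (Suc j') thus ?thesis using assms(5) by simp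
  qed
  have "fact b' / (real N ^ j * fact a') \<le> (real N ^ j * fact b) / (real N ^ j * fact a')"
    using f2 by (intro divide_right_mono) auto
  also have "\<dots> \<le> (real N ^ j * fact b) / (real N ^ j * fact (a - 1))"
    using f3 Npos by (intro divide_left_mono mult_left_mono mult_pos_pos) auto
  also have "\<dots> = PP a b"
  proof -
    have "real N ^ j \<noteq> 0" using Npos by simp
    moreover have "(fact (a - 1) :: real) \<noteq> 0" by simp
    ultimately show ?thesis using PP_fact[OF assms(1,2)] by (simp add: field_simps)
  qed
  finally show ?thesis .
qed

lemma L_up:
  assumes "d \<le> a" "a \<le> b"
  shows "(\<Prod>q\<in>{a..b}. real_of_int \<bar>int d - int q\<bar>) = PP (a - d) (b - d)"
  unfolding PP_def
  by (rule prod.reindex_bij_witness[where j = "\<lambda>q. q - d" and i = "\<lambda>k. k + d"]) (use assms in \<open>auto simp: of_nat_diff\<close>)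

lemma L_down:
  assumes "b \<le> d" "a \<le> b"
  shows "(\<Prod>q\<in>{a..b}. real_of_int \<bar>int d - int q\<bar>) = PP (d - b) (d - a)"
  unfolding PP_def
  by (rule prod.reindex_bij_witness[where j = "\<lambda>q. d - q" and i = "\<lambda>k. d - k"]) (use assms in \<open>auto simp: of_nat_diff\<close>)

lemma L_3:
  assumes "finite I"
  shows "(\<Prod>q\<in>I. real_of_int \<bar>3 * c - 3 * int q\<bar>) = 3 ^ card I * (\<Prod>q\<in>I. real_of_int \<bar>c - int q\<bar>)"
proof -
  have "(\<Prod>q\<in>I. real_of_int \<bar>3 * c - 3 * int q\<bar>) = (\<Prod>q\<in>I. 3 * real_of_int \<bar>c - int q\<bar>)"
  proof (intro prod.cong refl)
    fix q assume "q \<in> I"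
    have "3 * c - 3 * int q = 3 * (c - int q)" by simp
    hence "\<bar>3 * c - 3 * int q\<bar> = 3 * \<bar>c - int q\<bar>" by (simp only: abs_mult)
    thus "real_of_int \<bar>3 * c - 3 * int q\<bar> = 3 * real_of_int \<bar>c - int q\<bar>" by simp
  qed
  also have "\<dots> = 3 ^ card I * (\<Prod>q\<in>I. real_of_int \<bar>c - int q\<bar>)"
    by (simp add: prod.distrib)
  finally show ?thesis .
qed

lemma P3:
  "(\<Prod>y\<in>(\<lambda>q. 3 * int q) ` I. real_of_int \<bar>c - y\<bar>) = (\<Prod>q\<in>I. real_of_int \<bar>c - 3 * int q\<bar>)"
proof -
  have "inj_on (\<lambda>q. 3 * int q) I" by (auto simp: inj_on_def)
  from prod.reindex[OF this, of "\<lambda>y. real_of_int \<bar>c - y\<bar>"] show ?thesis by (simp add: o_def)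
qed

lemma P1:
  "(\<Prod>y\<in>int ` I. real_of_int \<bar>c - y\<bar>) = (\<Prod>q\<in>I. real_of_int \<bar>c - int q\<bar>)"
proof -
  have "inj_on int I" by (auto simp: inj_on_def)
  from prod.reindex[OF this, of "\<lambda>y. real_of_int \<bar>c - y\<bar>"] show ?thesis by (simp add: o_def)
qed

definition TT :: "nat \<Rightarrow> int set" where
  "TT M = {x. 0 \<le> x \<and> x \<le> 78 * int M \<and> (x \<le> 12 * int M \<or> 66 * int M \<le> x \<or> 3 dvd x)}"

lemma imgint: "int ` {a..b} = {x. int a \<le> x \<and> x \<le> int b}"
proof (rule set_eqI, rule iffI)
  fix x assume "x \<in> {x. int a \<le> x \<and> x \<le> int b}"
  hence "nat x \<in> {a..b}" "x = int (nat x)" by auto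
  thus "x \<in> int ` {a..b}" by blast
qed auto

lemma img3: "(\<lambda>q. 3 * int q) ` {a..b} = {x. 3 * int a \<le> x \<and> x \<le> 3 * int b \<and> 3 dvd x}"
proof (rule set_eqI, rule iffI)
  fix x assume x: "x \<in> {x. 3 * int a \<le> x \<and> x \<le> 3 * int b \<and> 3 dvd x}"
  then obtain k where k: "x = 3 * k" by auto
  with x have "nat k \<in> {a..b}" "x = 3 * int (nat k)" by auto
  thus "x \<in> (\<lambda>q. 3 * int q) ` {a..b}" by blast
qed auto

lemma TT_finite: "finite (TT M)"
proof -
  have "TT M \<subseteq> {0..78 * int M}" by (auto simp: TT_def)
  thus ?thesis by (rule finite_subset) simp
qed

definition TA :: "nat \<Rightarrow> int set" where "TA M = int ` {0..12*M}"
definition TB :: "nat \<Rightarrow> int set" where "TB M = (\<lambda>q. 3 * int q) ` {4*M+1..13*M}"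
definition TMid :: "nat \<Rightarrow> int set" where "TMid M = (\<lambda>q. 3 * int q) ` {4*M+1..22*M-1}"
definition TM2 :: "nat \<Rightarrow> int set" where "TM2 M = (\<lambda>q. 3 * int q) ` {13*M+1..22*M-1}"
definition TD :: "nat \<Rightarrow> int set" where "TD M = int ` {66*M..78*M}"

lemma gap3: assumes "3 dvd (x::int)" "3 dvd y" "y < x" shows "y + 3 \<le> x"
proof -
  obtain k l where kl: "x = 3 * k" "y = 3 * l" using assms(1,2) by (auto elim!: dvdE)
  hence "l < k" using assms(3) by simp
  thus ?thesis using kl by simp
qed

lemma gapsM:
  fixes x :: int
  shows "3 dvd x \<Longrightarrow> 12 * int M < x \<Longrightarrow> 12 * int M + 3 \<le> x"
    "3 dvd x \<Longrightarrow> x < 66 * int M \<Longrightarrow> x + 3 \<le> 66 * int M"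
    "3 dvd x \<Longrightarrow> 39 * int M < x \<Longrightarrow> 39 * int M + 3 \<le> x"
    "3 dvd x \<Longrightarrow> x < 39 * int M \<Longrightarrow> x + 3 \<le> 39 * int M"
proof -
  have a: "3 dvd (12 * int M)" "3 dvd (66 * int M)" "3 dvd (39 * int M)" by simp_all
  show "3 dvd x \<Longrightarrow> 12 * int M < x \<Longrightarrow> 12 * int M + 3 \<le> x" using gap3[OF _ a(1)] by blast
  show "3 dvd x \<Longrightarrow> x < 66 * int M \<Longrightarrow> x + 3 \<le> 66 * int M" using gap3[OF a(2)] by blast
  show "3 dvd x \<Longrightarrow> 39 * int M < x \<Longrightarrow> 39 * int M + 3 \<le> x" using gap3[OF _ a(3)] by blast
  show "3 dvd x \<Longrightarrow> x < 39 * int M \<Longrightarrow> x + 3 \<le> 39 * int M" using gap3[OF a(3)] by blast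
qed

lemma mem_TT: "x \<in> TT M \<longleftrightarrow> 0 \<le> x \<and> x \<le> 78 * int M \<and> (x \<le> 12 * int M \<or> 66 * int M \<le> x \<or> 3 dvd x)"
  by (simp add: TT_def)
lemma mem_TA: "x \<in> TA M \<longleftrightarrow> 0 \<le> x \<and> x \<le> 12 * int M"
  by (simp add: TA_def imgint)
lemma mem_TB: "x \<in> TB M \<longleftrightarrow> 12 * int M + 3 \<le> x \<and> x \<le> 39 * int M \<and> 3 dvd x"
  by (auto simp: TB_def img3)
lemma mem_TMid: "M \<ge> 1 \<Longrightarrow> x \<in> TMid M \<longleftrightarrow> 12 * int M + 3 \<le> x \<and> x \<le> 66 * int M - 3 \<and> 3 dvd x"
  by (auto simp: TMid_def img3 of_nat_diff)
lemma mem_TM2: "M \<ge> 1 \<Longrightarrow> x \<in> TM2 M \<longleftrightarrow> 39 * int M + 3 \<le> x \<and> x \<le> 66 * int M - 3 \<and> 3 dvd x"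
  by (auto simp: TM2_def img3 of_nat_diff)
lemma mem_TD: "x \<in> TD M \<longleftrightarrow> 66 * int M \<le> x \<and> x \<le> 78 * int M"
  by (simp add: TD_def imgint)

lemma TT_split:
  assumes M1: "M \<ge> 1"
  shows "TT M = TA M \<union> TMid M \<union> TD M" "TT M - TA M = TMid M \<union> TD M"
    "TT M - TB M = TA M \<union> TM2 M \<union> TD M"
    "TA M \<inter> TMid M = {}" "TA M \<inter> TD M = {}" "TMid M \<inter> TD M = {}"
    "TA M \<inter> TM2 M = {}" "TM2 M \<inter> TD M = {}" "TA M \<inter> TB M = {}"
    "TA M \<subseteq> TT M" "TB M \<subseteq> TT M"
proof -
  note mems = mem_TT mem_TA mem_TB mem_TMid[OF M1] mem_TM2[OF M1] mem_TD
  show "TT M = TA M \<union> TMid M \<union> TD M"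
  proof (rule set_eqI)
    fix x show "x \<in> TT M \<longleftrightarrow> x \<in> TA M \<union> TMid M \<union> TD M"
      using gapsM[of x M] M1 unfolding Un_iff mems by auto
  qed
  show "TT M - TA M = TMid M \<union> TD M"
  proof (rule set_eqI)
    fix x show "x \<in> TT M - TA M \<longleftrightarrow> x \<in> TMid M \<union> TD M"
      using gapsM[of x M] M1 unfolding Un_iff Diff_iff mems by auto
  qed
  show "TT M - TB M = TA M \<union> TM2 M \<union> TD M"
  proof (rule set_eqI)
    fix x show "x \<in> TT M - TB M \<longleftrightarrow> x \<in> TA M \<union> TM2 M \<union> TD M"
      using gapsM[of x M] M1 unfolding Un_iff Diff_iff mems by auto
  qed
  show "TA M \<inter> TMid M = {}" using M1 by (auto simp: mems)
  show "TA M \<inter> TD M = {}" using M1 by (auto simp: mems)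
  show "TMid M \<inter> TD M = {}" using M1 by (auto simp: mems)
  show "TA M \<inter> TM2 M = {}" using M1 by (auto simp: mems)
  show "TM2 M \<inter> TD M = {}" using M1 by (auto simp: mems)
  show "TA M \<inter> TB M = {}" using M1 by (auto simp: mems)
  show "TA M \<subseteq> TT M" using M1 by (auto simp: mems)
  show "TB M \<subseteq> TT M" using M1 by (auto simp: mems)
qed

lemma TT_card:
  assumes "M \<ge> 1"
  shows "card (TT M) = 42 * M + 1"
proof -
  have "card (TT M) = card (TA M) + card (TMid M) + card (TD M)"
  proof -
    have f: "finite (TA M)" "finite (TMid M)" "finite (TD M)" by (simp_all add: TA_def TMid_def TD_def)
    have "card (TA M \<union> TMid M \<union> TD M) = card (TA M \<union> TMid M) + card (TD M)"
      by (rule card_Un_disjoint) (use f TT_split(5,6)[OF assms] in auto)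
    also have "card (TA M \<union> TMid M) = card (TA M) + card (TMid M)"
      by (rule card_Un_disjoint) (use f TT_split(4)[OF assms] in auto)
    finally show ?thesis using TT_split(1)[OF assms] by simp
  qed
  also have "card (TA M) = 12 * M + 1" unfolding TA_def by (subst card_image) (auto simp: inj_on_def)
  also have "card (TMid M) = 18 * M - 1" unfolding TMid_def using assms by (subst card_image) (auto simp: inj_on_def)
  also have "card (TD M) = 12 * M + 1" unfolding TD_def by (subst card_image) (auto simp: inj_on_def)
  finally show ?thesis using assms by simp
qed

lemma prod3_up:
  assumes "d \<le> a" "a \<le> b"
  shows "(\<Prod>y\<in>(\<lambda>q. 3 * int q) ` {a..b}. real_of_int \<bar>3 * int d - y\<bar>) = 3 ^ (b + 1 - a) * PP (a - d) (b - d)"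
  unfolding P3 L_3[OF finite_atLeastAtMost] L_up[OF assms] by simp

lemma prod3_down:
  assumes "b \<le> d" "a \<le> b"
  shows "(\<Prod>y\<in>(\<lambda>q. 3 * int q) ` {a..b}. real_of_int \<bar>3 * int d - y\<bar>) = 3 ^ (b + 1 - a) * PP (d - b) (d - a)"
  unfolding P3 L_3[OF finite_atLeastAtMost] L_down[OF assms] by simp

lemma prod1_up:
  assumes "d \<le> a" "a \<le> b"
  shows "(\<Prod>y\<in>int ` {a..b}. real_of_int \<bar>int d - y\<bar>) = PP (a - d) (b - d)"
  unfolding P1 L_up[OF assms] ..

lemma prod1_down:
  assumes "b \<le> d" "a \<le> b"
  shows "(\<Prod>y\<in>int ` {a..b}. real_of_int \<bar>int d - y\<bar>) = PP (d - b) (d - a)"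
  unfolding P1 L_down[OF assms] ..

lemma prod_union3:
  assumes "finite A" "finite B" "finite C" "A \<inter> B = {}" "A \<inter> C = {}" "B \<inter> C = {}"
  shows "(\<Prod>y\<in>A \<union> B \<union> C. f y) = (\<Prod>y\<in>A. f y) * (\<Prod>y\<in>B. f y) * (\<Prod>y\<in>C. f y)"
proof -
  have "(\<Prod>y\<in>A \<union> B \<union> C. f y) = (\<Prod>y\<in>A \<union> B. f y) * (\<Prod>y\<in>C. f y)"
    by (rule prod.union_disjoint) (use assms in auto)
  also have "(\<Prod>y\<in>A \<union> B. f y) = (\<Prod>y\<in>A. f y) * (\<Prod>y\<in>B. f y)"
    by (rule prod.union_disjoint) (use assms in auto)
  finally show ?thesis .
qed

lemma YLA_eq:
  assumes M1: "M \<ge> 1"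
  shows "(\<Prod>y\<in>TT M - TA M. real_of_int \<bar>0 - y\<bar>) = 3 ^ (18 * M - 1) * PP (4 * M + 1) (22 * M - 1) * PP (66 * M) (78 * M)"
proof -
  have "(\<Prod>y\<in>TT M - TA M. real_of_int \<bar>0 - y\<bar>) = (\<Prod>y\<in>TMid M. real_of_int \<bar>0 - y\<bar>) * (\<Prod>y\<in>TD M. real_of_int \<bar>0 - y\<bar>)"
    unfolding TT_split(2)[OF M1]
    by (rule prod.union_disjoint) (use TT_split(6)[OF M1] in \<open>auto simp: TMid_def TD_def\<close>)
  also have "(\<Prod>y\<in>TMid M. real_of_int \<bar>0 - y\<bar>) = 3 ^ (18 * M - 1) * PP (4 * M + 1) (22 * M - 1)"
    using prod3_up[of 0 "4 * M + 1" "22 * M - 1"] M1 unfolding TMid_def by simp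
  also have "(\<Prod>y\<in>TD M. real_of_int \<bar>0 - y\<bar>) = PP (66 * M) (78 * M)"
    using prod1_up[of 0 "66 * M" "78 * M"] M1 unfolding TD_def by simp
  finally show ?thesis .
qed

lemma YRA_eq:
  assumes M1: "M \<ge> 1"
  shows "(\<Prod>y\<in>TT M - TA M. real_of_int \<bar>12 * int M - y\<bar>) = 3 ^ (18 * M - 1) * PP 1 (18 * M - 1) * PP (54 * M) (66 * M)"
proof -
  have "(\<Prod>y\<in>TT M - TA M. real_of_int \<bar>12 * int M - y\<bar>) = (\<Prod>y\<in>TMid M. real_of_int \<bar>12 * int M - y\<bar>) * (\<Prod>y\<in>TD M. real_of_int \<bar>12 * int M - y\<bar>)"
    unfolding TT_split(2)[OF M1]
    by (rule prod.union_disjoint) (use TT_split(6)[OF M1] in \<open>auto simp: TMid_def TD_def\<close>)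
  also have "(\<Prod>y\<in>TMid M. real_of_int \<bar>12 * int M - y\<bar>) = 3 ^ (18 * M - 1) * PP 1 (18 * M - 1)"
  proof -
    have e: "(12::int) * int M = 3 * int (4 * M)" by simp
    have "(\<Prod>y\<in>TMid M. real_of_int \<bar>12 * int M - y\<bar>) = (\<Prod>y\<in>TMid M. real_of_int \<bar>3 * int (4 * M) - y\<bar>)" by (simp only: e)
    also have "\<dots> = 3 ^ (18 * M - 1) * PP 1 (18 * M - 1)"
      using prod3_up[of "4 * M" "4 * M + 1" "22 * M - 1"] M1 unfolding TMid_def
      by (simp add: Suc_diff_Suc numeral_eq_Suc)
    finally show ?thesis .
  qed
  also have "(\<Prod>y\<in>TD M. real_of_int \<bar>12 * int M - y\<bar>) = PP (54 * M) (66 * M)"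
  proof -
    have e: "(12::int) * int M = int (12 * M)" by simp
    have "(\<Prod>y\<in>TD M. real_of_int \<bar>12 * int M - y\<bar>) = (\<Prod>y\<in>TD M. real_of_int \<bar>int (12 * M) - y\<bar>)" by (simp only: e)
    also have "\<dots> = PP (54 * M) (66 * M)"
      using prod1_up[of "12 * M" "66 * M" "78 * M"] M1 unfolding TD_def by simp
    finally show ?thesis .
  qed
  finally show ?thesis .
qed

lemma YLB_eq:
  assumes M1: "M \<ge> 1"
  shows "(\<Prod>y\<in>TT M - TB M. real_of_int \<bar>(12 * int M + 3) - y\<bar>) = PP 3 (12 * M + 3) * (3 ^ (9 * M - 1) * PP (9 * M) (18 * M - 2)) * PP (54 * M - 3) (66 * M - 3)"
proof -
  have fins: "finite (TA M)" "finite (TM2 M)" "finite (TD M)" by (simp_all add: TA_def TM2_def TD_def)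
  have "(\<Prod>y\<in>TT M - TB M. real_of_int \<bar>(12 * int M + 3) - y\<bar>) =
     (\<Prod>y\<in>TA M. real_of_int \<bar>(12 * int M + 3) - y\<bar>) * (\<Prod>y\<in>TM2 M. real_of_int \<bar>(12 * int M + 3) - y\<bar>) * (\<Prod>y\<in>TD M. real_of_int \<bar>(12 * int M + 3) - y\<bar>)"
    unfolding TT_split(3)[OF M1] by (rule prod_union3[OF fins TT_split(7)[OF M1] TT_split(5)[OF M1] TT_split(8)[OF M1]])
  also have "(\<Prod>y\<in>TA M. real_of_int \<bar>(12 * int M + 3) - y\<bar>) = PP 3 (12 * M + 3)"
  proof -
    have e: "(12::int) * int M + 3 = int (12 * M + 3)" by simp
    have "(\<Prod>y\<in>TA M. real_of_int \<bar>(12 * int M + 3) - y\<bar>) = (\<Prod>y\<in>TA M. real_of_int \<bar>int (12 * M + 3) - y\<bar>)" by (simp only: e)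
    also have "\<dots> = PP 3 (12 * M + 3)"
      using prod1_down[of "12 * M" "12 * M + 3" 0] unfolding TA_def by simp
    finally show ?thesis .
  qed
  also have "(\<Prod>y\<in>TM2 M. real_of_int \<bar>(12 * int M + 3) - y\<bar>) = 3 ^ (9 * M - 1) * PP (9 * M) (18 * M - 2)"
  proof -
    have e: "(12::int) * int M + 3 = 3 * int (4 * M + 1)" by simp
    have "(\<Prod>y\<in>TM2 M. real_of_int \<bar>(12 * int M + 3) - y\<bar>) = (\<Prod>y\<in>TM2 M. real_of_int \<bar>3 * int (4 * M + 1) - y\<bar>)" by (simp only: e)
    also have "\<dots> = 3 ^ (9 * M - 1) * PP (9 * M) (18 * M - 2)"
      using prod3_up[of "4 * M + 1" "13 * M + 1" "22 * M - 1"] M1 unfolding TM2_def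
      by (simp add: Suc_diff_Suc numeral_eq_Suc)
    finally show ?thesis .
  qed
  also have "(\<Prod>y\<in>TD M. real_of_int \<bar>(12 * int M + 3) - y\<bar>) = PP (54 * M - 3) (66 * M - 3)"
  proof -
    have e: "(12::int) * int M + 3 = int (12 * M + 3)" by simp
    have "(\<Prod>y\<in>TD M. real_of_int \<bar>(12 * int M + 3) - y\<bar>) = (\<Prod>y\<in>TD M. real_of_int \<bar>int (12 * M + 3) - y\<bar>)" by (simp only: e)
    also have "\<dots> = PP (54 * M - 3) (66 * M - 3)"
      using prod1_up[of "12 * M + 3" "66 * M" "78 * M"] M1 unfolding TD_def by simp
    finally show ?thesis .
  qed
  finally show ?thesis .
qed

lemma YRB_eq:
  assumes M1: "M \<ge> 1"
  shows "(\<Prod>y\<in>TT M - TB M. real_of_int \<bar>(12 * int M + 3) + int 3 * int (9 * M - 1) - y\<bar>) = PP (27 * M) (39 * M) * (3 ^ (9 * M - 1) * PP 1 (9 * M - 1)) * PP (27 * M) (39 * M)"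
proof -
  have x: "(12 * int M + 3) + int 3 * int (9 * M - 1) = 39 * int M" using M1 by (simp add: of_nat_diff)
  have fins: "finite (TA M)" "finite (TM2 M)" "finite (TD M)" by (simp_all add: TA_def TM2_def TD_def)
  have "(\<Prod>y\<in>TT M - TB M. real_of_int \<bar>39 * int M - y\<bar>) =
     (\<Prod>y\<in>TA M. real_of_int \<bar>39 * int M - y\<bar>) * (\<Prod>y\<in>TM2 M. real_of_int \<bar>39 * int M - y\<bar>) * (\<Prod>y\<in>TD M. real_of_int \<bar>39 * int M - y\<bar>)"
    unfolding TT_split(3)[OF M1] by (rule prod_union3[OF fins TT_split(7)[OF M1] TT_split(5)[OF M1] TT_split(8)[OF M1]])
  also have "(\<Prod>y\<in>TA M. real_of_int \<bar>39 * int M - y\<bar>) = PP (27 * M) (39 * M)"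
  proof -
    have e: "(39::int) * int M = int (39 * M)" by simp
    have "(\<Prod>y\<in>TA M. real_of_int \<bar>39 * int M - y\<bar>) = (\<Prod>y\<in>TA M. real_of_int \<bar>int (39 * M) - y\<bar>)" by (simp only: e)
    also have "\<dots> = PP (27 * M) (39 * M)"
      using prod1_down[of "12 * M" "39 * M" 0] unfolding TA_def by simp
    finally show ?thesis .
  qed
  also have "(\<Prod>y\<in>TM2 M. real_of_int \<bar>39 * int M - y\<bar>) = 3 ^ (9 * M - 1) * PP 1 (9 * M - 1)"
  proof -
    have e: "(39::int) * int M = 3 * int (13 * M)" by simp
    have "(\<Prod>y\<in>TM2 M. real_of_int \<bar>39 * int M - y\<bar>) = (\<Prod>y\<in>TM2 M. real_of_int \<bar>3 * int (13 * M) - y\<bar>)" by (simp only: e)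
    also have "\<dots> = 3 ^ (9 * M - 1) * PP 1 (9 * M - 1)"
      using prod3_up[of "13 * M" "13 * M + 1" "22 * M - 1"] M1 unfolding TM2_def
      by (simp add: Suc_diff_Suc numeral_eq_Suc)
    finally show ?thesis .
  qed
  also have "(\<Prod>y\<in>TD M. real_of_int \<bar>39 * int M - y\<bar>) = PP (27 * M) (39 * M)"
  proof -
    have e: "(39::int) * int M = int (39 * M)" by simp
    have "(\<Prod>y\<in>TD M. real_of_int \<bar>39 * int M - y\<bar>) = (\<Prod>y\<in>TD M. real_of_int \<bar>int (39 * M) - y\<bar>)" by (simp only: e)
    also have "\<dots> = PP (27 * M) (39 * M)"
      using prod1_up[of "39 * M" "66 * M" "78 * M"] M1 unfolding TD_def by simp
    finally show ?thesis .
  qed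
  finally show ?thesis unfolding x .
qed

definition RR :: "int set \<Rightarrow> int \<Rightarrow> real" where
  "RR T x = 1 / (\<Prod>y\<in>T-{x}. real_of_int \<bar>x - y\<bar>)"

lemma RR_nonneg: "RR T x \<ge> 0"
  unfolding RR_def by (simp add: prod_nonneg)

lemma TT_sym_mem: "x \<in> TT M \<Longrightarrow> 78 * int M - x \<in> TT M"
proof -
  assume x: "x \<in> TT M"
  have "3 dvd (78 * int M)" by simp
  hence "3 dvd x \<Longrightarrow> 3 dvd (78 * int M - x)" by (simp add: dvd_diff)
  thus ?thesis using x unfolding mem_TT by auto
qed

lemma RR_sym:
  assumes x: "x \<in> TT M"
  shows "RR (TT M) (78 * int M - x) = RR (TT M) x"
proof -
  define s where "s = (\<lambda>z::int. 78 * int M - z)"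
  have inj: "inj s" by (auto simp: inj_def s_def)
  have img: "TT M - {s x} = s ` (TT M - {x})"
  proof (rule set_eqI, rule iffI)
    fix y assume y: "y \<in> TT M - {s x}"
    hence "s y \<in> TT M - {x}" using TT_sym_mem[of y M] by (auto simp: s_def)
    moreover have "y = s (s y)" by (simp add: s_def)
    ultimately show "y \<in> s ` (TT M - {x})" by blast
  next
    fix y assume "y \<in> s ` (TT M - {x})"
    then obtain z where z: "z \<in> TT M - {x}" "y = s z" by auto
    thus "y \<in> TT M - {s x}" using TT_sym_mem[of z M] by (auto simp: s_def)
  qed
  have "(\<Prod>y\<in>TT M - {s x}. real_of_int \<bar>s x - y\<bar>) = (\<Prod>z\<in>TT M - {x}. real_of_int \<bar>s x - s z\<bar>)"
    unfolding img by (rule prod.reindex_cong[OF inj_on_subset[OF inj]]) auto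
  also have "\<dots> = (\<Prod>z\<in>TT M - {x}. real_of_int \<bar>x - z\<bar>)"
    by (intro prod.cong refl) (simp add: s_def abs_minus_commute)
  finally show ?thesis unfolding RR_def s_def by simp
qed

lemma TT_sym_sum:
  assumes M1: "M \<ge> 1"
  shows "(\<Sum>x\<in>TT M. RR (TT M) x) \<le> 2 * ((\<Sum>x\<in>TA M. RR (TT M) x) + (\<Sum>x\<in>TB M. RR (TT M) x))"
proof -
  define U where "U = {x \<in> TT M. 39 * int M < x}"
  define s where "s = (\<lambda>z::int. 78 * int M - z)"
  have fin: "finite (TT M)" by (rule TT_finite)
  have AB: "TA M \<union> TB M = {x \<in> TT M. x \<le> 39 * int M}"
  proof (rule set_eqI)
    fix x show "x \<in> TA M \<union> TB M \<longleftrightarrow> x \<in> {x \<in> TT M. x \<le> 39 * int M}"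
      using gapsM[of x M] M1 unfolding Un_iff mem_Collect_eq mem_TT mem_TA mem_TB by auto
  qed
  have split: "TT M = (TA M \<union> TB M) \<union> U" unfolding AB U_def by auto
  have disj: "(TA M \<union> TB M) \<inter> U = {}" unfolding AB U_def by auto
  have finAB: "finite (TA M \<union> TB M)" and finU: "finite U" using fin unfolding AB U_def by auto
  have "(\<Sum>x\<in>U. RR (TT M) x) = (\<Sum>x\<in>U. RR (TT M) (s x))"
    by (intro sum.cong refl) (auto simp: U_def s_def RR_sym)
  also have "\<dots> = (\<Sum>x\<in>s ` U. RR (TT M) x)"
  proof -
    have "inj_on s U" by (auto simp: inj_on_def s_def)
    from sum.reindex[OF this, of "RR (TT M)"] show ?thesis by (simp add: o_def)
  qed
  also have "\<dots> \<le> (\<Sum>x\<in>TA M \<union> TB M. RR (TT M) x)"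
  proof (rule sum_mono2[OF finAB])
    show "s ` U \<subseteq> TA M \<union> TB M"
      unfolding AB U_def s_def using TT_sym_mem[of _ M] by auto
  qed (rule RR_nonneg)
  finally have U_le: "(\<Sum>x\<in>U. RR (TT M) x) \<le> (\<Sum>x\<in>TA M \<union> TB M. RR (TT M) x)" .
  have "(\<Sum>x\<in>TT M. RR (TT M) x) = (\<Sum>x\<in>TA M \<union> TB M. RR (TT M) x) + (\<Sum>x\<in>U. RR (TT M) x)"
    by (subst split, rule sum.union_disjoint[OF finAB finU disj])
  also have "(\<Sum>x\<in>TA M \<union> TB M. RR (TT M) x) = (\<Sum>x\<in>TA M. RR (TT M) x) + (\<Sum>x\<in>TB M. RR (TT M) x)"
    by (rule sum.union_disjoint) (use finAB TT_split(9)[OF M1] in auto)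
  finally show ?thesis using U_le TT_split(9)[OF M1] sum.union_disjoint[of "TA M" "TB M" "RR (TT M)"] finAB by simp
qed

lemma blockA_bound:
  assumes M1: "M \<ge> 1"
  shows "(\<Sum>x\<in>TA M. RR (TT M) x) \<le> 1 / fact (12 * M) * (4 ^ (12 * M) / (\<Prod>y\<in>TT M - TA M. real_of_int \<bar>0 - y\<bar>)
      + (4/3) ^ (12 * M) / (\<Prod>y\<in>TT M - TA M. real_of_int \<bar>12 * int M - y\<bar>))"
proof -
  have BA: "(\<lambda>q. 0 + int 1 * int q) ` {..<12*M+1} = TA M"
    unfolding TA_def by (auto simp: image_iff)
  have BT: "(\<lambda>q. 0 + int 1 * int q) ` {..<12*M+1} \<subseteq> TT M" unfolding BA using TT_split(10)[OF M1] .
  have out: "\<forall>y\<in>TT M - (\<lambda>q. 0 + int 1 * int q) ` {..<12*M+1}. y < 0 \<or> 0 + int 1 * int (12*M+1-1) < y"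
    unfolding BA using TT_split(2)[OF M1] mem_TMid[OF M1] mem_TD M1 by auto
  have "12 * M + 1 \<ge> 2" using M1 by simp
  from block_sum_bound[OF TT_finite BT _ this out, of "1/4"]
  show ?thesis unfolding BA RR_def by simp
qed

lemma blockB_bound:
  assumes M1: "M \<ge> 1"
  shows "(\<Sum>x\<in>TB M. RR (TT M) x) \<le> 1 / (3 ^ (9 * M - 1) * fact (9 * M - 1)) * ((5/3) ^ (9 * M - 1) / (\<Prod>y\<in>TT M - TB M. real_of_int \<bar>(12 * int M + 3) - y\<bar>)
      + (5/2) ^ (9 * M - 1) / (\<Prod>y\<in>TT M - TB M. real_of_int \<bar>(12 * int M + 3) + int 3 * int (9 * M - 1) - y\<bar>))"
proof -
  have BB: "(\<lambda>q. (12 * int M + 3) + int 3 * int q) ` {..<9*M} = TB M"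
  proof (rule set_eqI, rule iffI)
    fix x assume "x \<in> (\<lambda>q. (12 * int M + 3) + int 3 * int q) ` {..<9*M}"
    then obtain q where "q < 9 * M" "x = 12 * int M + 3 + 3 * int q" by auto
    thus "x \<in> TB M" unfolding mem_TB by auto
  next
    fix x assume "x \<in> TB M"
    hence x: "12 * int M + 3 \<le> x" "x \<le> 39 * int M" "3 dvd x" unfolding mem_TB by auto
    then obtain k where k: "x = 3 * k" by (auto elim!: dvdE)
    define q where "q = nat (k - 4 * int M - 1)"
    have "int q = k - 4 * int M - 1" using x k by (simp add: q_def)
    hence "x = 12 * int M + 3 + 3 * int q" "q < 9 * M" using x k by linarith+
    thus "x \<in> (\<lambda>q. (12 * int M + 3) + int 3 * int q) ` {..<9*M}" by auto
  qed
  have BT: "(\<lambda>q. (12 * int M + 3) + int 3 * int q) ` {..<9*M} \<subseteq> TT M" unfolding BB using TT_split(11)[OF M1] .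
  have out: "\<forall>y\<in>TT M - (\<lambda>q. (12 * int M + 3) + int 3 * int q) ` {..<9*M}. y < 12 * int M + 3 \<or> (12 * int M + 3) + int 3 * int (9*M-1) < y"
  proof
    fix y assume "y \<in> TT M - (\<lambda>q. (12 * int M + 3) + int 3 * int q) ` {..<9*M}"
    hence "y \<in> TA M \<union> TM2 M \<union> TD M" unfolding BB TT_split(3)[OF M1] .
    moreover have "(12 * int M + 3) + int 3 * int (9*M-1) = 39 * int M" using M1 by (simp add: of_nat_diff)
    ultimately show "y < 12 * int M + 3 \<or> (12 * int M + 3) + int 3 * int (9*M-1) < y"
      unfolding Un_iff mem_TA mem_TM2[OF M1] mem_TD using M1 by auto
  qed
  have "9 * M \<ge> 2" using M1 by simp
  from block_sum_bound[OF TT_finite BT _ this out, of "3/5"]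
  show ?thesis unfolding BB RR_def by simp
qed

lemma pos_le_div:
  fixes a b c :: real
  assumes "0 < b" "b \<le> c" "0 \<le> a"
  shows "a / c \<le> a / b"
  using assms by (intro divide_left_mono) auto

lemma PP_nonneg: "PP a b \<ge> 0"
  unfolding PP_def by (simp add: prod_nonneg)

lemma termAL:
  assumes M1: "M \<ge> 1"
  shows "(78 * real M) ^ 42 * fact (42 * M) * (1 / fact (12 * M) * (4 ^ (12 * M) / (\<Prod>y\<in>TT M - TA M. real_of_int \<bar>0 - y\<bar>)))
    \<le> 3 * (78 * real M) ^ 43 * (prod_list (map (\<lambda>a. fact (a * M)) [42, 4, 66]) / prod_list (map (\<lambda>b. fact (b * M)) [12, 22, 78])) * ((4::real) ^ 12 / 3 ^ 18) ^ M"
proof -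
  define X where "X = 78 * real M"
  define F42 F4 F66 F12 F22 F78 where "F42 = (fact (42 * M) :: real)" and "F4 = (fact (4 * M) :: real)"
    and "F66 = (fact (66 * M) :: real)" and "F12 = (fact (12 * M) :: real)" and "F22 = (fact (22 * M) :: real)"
    and "F78 = (fact (78 * M) :: real)"
  define P3 where "P3 = (3::real) ^ (18 * M - 1)"
  define P4 where "P4 = (4::real) ^ (12 * M)"
  have Xpos: "X > 0" using M1 by (simp add: X_def)
  have pos: "F42 > 0" "F4 > 0" "F66 > 0" "F12 > 0" "F22 > 0" "F78 > 0" "P3 > 0" "P4 > 0"
    by (simp_all add: F42_def F4_def F66_def F12_def F22_def F78_def P3_def P4_def)
  have p1: "F22 / (X ^ 1 * F4) \<le> PP (4 * M + 1) (22 * M - 1)"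
    unfolding F22_def F4_def X_def using PP_lower[of "4 * M + 1" "22 * M - 1" "4 * M" "22 * M" 1 "78 * M"] M1 by simp
  have p2: "F78 / (X ^ 0 * F66) \<le> PP (66 * M) (78 * M)"
    unfolding F78_def F66_def X_def using PP_lower[of "66 * M" "78 * M" "66 * M" "78 * M" 0 "78 * M"] M1 by simp
  define Y0 where "Y0 = P3 * (F22 / (X ^ 1 * F4)) * (F78 / (X ^ 0 * F66))"
  have Y0pos: "Y0 > 0" unfolding Y0_def using pos Xpos by simp
  have Yge: "Y0 \<le> (\<Prod>y\<in>TT M - TA M. real_of_int \<bar>0 - y\<bar>)"
    unfolding YLA_eq[OF M1] Y0_def P3_def
    using p1 p2 pos Xpos PP_nonneg by (intro mult_mono) (auto intro!: mult_nonneg_nonneg)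
  have "(78 * real M) ^ 42 * fact (42 * M) * (1 / fact (12 * M) * (4 ^ (12 * M) / (\<Prod>y\<in>TT M - TA M. real_of_int \<bar>0 - y\<bar>)))
      \<le> X ^ 42 * F42 * (1 / F12 * (P4 / Y0))"
    unfolding X_def F42_def F12_def P4_def
    using Y0pos Yge by (intro mult_left_mono pos_le_div) (auto simp: P4_def)
  also have "\<dots> = 3 * X ^ 43 * (F42 * (F4 * F66) / (F12 * (F22 * F78))) * (P4 / (3 * P3))"
  proof -
    have X43: "X ^ 43 = X * X ^ 42" using power_Suc[of X 42] by simp
    show ?thesis unfolding Y0_def X43 using pos Xpos by (simp add: field_simps)
  qed
  also have "(3::real) * P3 = 3 ^ (18 * M)" unfolding P3_def using M1
    by (metis Suc_pred' mult_pos_pos nat_0_less_mult_iff numeral_eq_Suc pos_add_strict power_Suc zero_less_numeral less_le_trans zero_less_one)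
  also have "P4 / 3 ^ (18 * M) = ((4::real) ^ 12 / 3 ^ 18) ^ M"
    unfolding P4_def by (simp add: power_divide power_mult)
  finally show ?thesis unfolding X_def F42_def F4_def F66_def F12_def F22_def F78_def by simp
qed

lemma three_pow_pred: "n \<ge> 1 \<Longrightarrow> (3::real) * 3 ^ (n - 1) = 3 ^ n"
  by (metis Suc_diff_1 less_le_trans power_Suc zero_less_one)

lemma termAR:
  assumes M1: "M \<ge> 1"
  shows "(78 * real M) ^ 42 * fact (42 * M) * (1 / fact (12 * M) * ((4/3) ^ (12 * M) / (\<Prod>y\<in>TT M - TA M. real_of_int \<bar>12 * int M - y\<bar>)))
    \<le> 3 * (78 * real M) ^ 43 * (prod_list (map (\<lambda>a. fact (a * M)) [42, 54]) / prod_list (map (\<lambda>b. fact (b * M)) [12, 18, 66])) * ((4::real) ^ 12 / 3 ^ 30) ^ M"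
proof -
  define X where "X = 78 * real M"
  define F42 F54 F66 F12 F18 where "F42 = (fact (42 * M) :: real)" and "F54 = (fact (54 * M) :: real)"
    and "F66 = (fact (66 * M) :: real)" and "F12 = (fact (12 * M) :: real)" and "F18 = (fact (18 * M) :: real)"
  define P3 where "P3 = (3::real) ^ (18 * M - 1)"
  define P4 where "P4 = (4::real) ^ (12 * M)"
  define Q3 where "Q3 = (3::real) ^ (12 * M)"
  have Xpos: "X > 0" using M1 by (simp add: X_def)
  have pos: "F42 > 0" "F54 > 0" "F66 > 0" "F12 > 0" "F18 > 0" "P3 > 0" "P4 > 0" "Q3 > 0"
    by (simp_all add: F42_def F54_def F66_def F12_def F18_def P3_def P4_def Q3_def)
  have p1: "F18 / (X ^ 1 * fact 0) \<le> PP 1 (18 * M - 1)"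
    unfolding F18_def X_def using PP_lower[of 1 "18 * M - 1" 0 "18 * M" 1 "78 * M"] M1 by simp
  have p2: "F66 / (X ^ 0 * F54) \<le> PP (54 * M) (66 * M)"
    unfolding F66_def F54_def X_def using PP_lower[of "54 * M" "66 * M" "54 * M" "66 * M" 0 "78 * M"] M1 by simp
  define Y0 where "Y0 = P3 * (F18 / (X ^ 1 * fact 0)) * (F66 / (X ^ 0 * F54))"
  have Y0pos: "Y0 > 0" unfolding Y0_def using pos Xpos by simp
  have Yge: "Y0 \<le> (\<Prod>y\<in>TT M - TA M. real_of_int \<bar>12 * int M - y\<bar>)"
    unfolding YRA_eq[OF M1] Y0_def P3_def
    using p1 p2 pos Xpos PP_nonneg by (intro mult_mono) (auto intro!: mult_nonneg_nonneg)
  have e43: "(4/3::real) ^ (12 * M) = P4 / Q3" unfolding P4_def Q3_def by (simp add: power_divide)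
  have "(78 * real M) ^ 42 * fact (42 * M) * (1 / fact (12 * M) * ((4/3) ^ (12 * M) / (\<Prod>y\<in>TT M - TA M. real_of_int \<bar>12 * int M - y\<bar>)))
      \<le> X ^ 42 * F42 * (1 / F12 * ((P4 / Q3) / Y0))"
    unfolding X_def F42_def F12_def e43
    using Y0pos Yge pos by (intro mult_left_mono pos_le_div) auto
  also have "\<dots> = 3 * X ^ 43 * (F42 * F54 / (F12 * (F18 * F66))) * (P4 / (Q3 * (3 * P3)))"
  proof -
    have X43: "X ^ 43 = X * X ^ 42" using power_Suc[of X 42] by simp
    show ?thesis unfolding Y0_def X43 using pos Xpos by (simp add: field_simps)
  qed
  also have "(3::real) * P3 = 3 ^ (18 * M)" unfolding P3_def using three_pow_pred[of "18 * M"] M1 by simp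
  also have "P4 / (Q3 * 3 ^ (18 * M)) = ((4::real) ^ 12 / 3 ^ 30) ^ M"
  proof -
    have "((4::real) ^ 12 / 3 ^ 30) ^ M = (4 ^ 12) ^ M / (3 ^ 30) ^ M" by (simp only: power_divide)
    also have "\<dots> = 4 ^ (12 * M) / 3 ^ (30 * M)" by (simp only: power_mult)
    also have "(3::real) ^ (30 * M) = 3 ^ (12 * M + 18 * M)" by simp
    also have "\<dots> = Q3 * 3 ^ (18 * M)" unfolding Q3_def by (simp only: power_add)
    finally show ?thesis unfolding P4_def ..
  qed
  finally show ?thesis unfolding X_def F42_def F54_def F66_def F12_def F18_def by simp
qed

lemma termBL:
  assumes M1: "M \<ge> 1"
  shows "(78 * real M) ^ 42 * fact (42 * M) * (1 / (3 ^ (9 * M - 1) * fact (9 * M - 1)) * ((5/3) ^ (9 * M - 1) / (\<Prod>y\<in>TT M - TB M. real_of_int \<bar>(12 * int M + 3) - y\<bar>)))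
    \<le> 18 * (78 * real M) ^ 48 * (prod_list (map (\<lambda>a. fact (a * M)) [42, 54]) / prod_list (map (\<lambda>b. fact (b * M)) [12, 18, 66])) * ((5::real) ^ 9 / 3 ^ 27) ^ M"
proof -
  define X where "X = 78 * real M"
  define F42 F54 F66 F12 F18 F9 F9' where "F42 = (fact (42 * M) :: real)" and "F54 = (fact (54 * M) :: real)"
    and "F66 = (fact (66 * M) :: real)" and "F12 = (fact (12 * M) :: real)" and "F18 = (fact (18 * M) :: real)"
    and "F9 = (fact (9 * M) :: real)" and "F9' = (fact (9 * M - 1) :: real)"
  define P3 where "P3 = (3::real) ^ (9 * M - 1)"
  define R5 where "R5 = (5::real) ^ (9 * M)"
  have Xpos: "X > 0" using M1 by (simp add: X_def)
  have pos: "F42 > 0" "F54 > 0" "F66 > 0" "F12 > 0" "F18 > 0" "F9 > 0" "F9' > 0" "P3 > 0" "R5 > 0"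
    by (simp_all add: F42_def F54_def F66_def F12_def F18_def F9_def F9'_def P3_def R5_def)
  have p1: "F12 / (X ^ 0 * fact 2) \<le> PP 3 (12 * M + 3)"
    unfolding F12_def X_def using PP_lower[of 3 "12 * M + 3" 2 "12 * M" 0 "78 * M"] M1 by simp
  have p2: "F18 / (X ^ 2 * F9) \<le> PP (9 * M) (18 * M - 2)"
    unfolding F18_def F9_def X_def using PP_lower[of "9 * M" "18 * M - 2" "9 * M" "18 * M" 2 "78 * M"] M1 by simp
  have p3: "F66 / (X ^ 3 * F54) \<le> PP (54 * M - 3) (66 * M - 3)"
    unfolding F66_def F54_def X_def using PP_lower[of "54 * M - 3" "66 * M - 3" "54 * M" "66 * M" 3 "78 * M"] M1 by simp
  have p4: "F9 / (X ^ 1 * fact 0) \<le> F9'"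
  proof -
    have "F9 / (X ^ 1 * fact 0) \<le> PP 1 (9 * M - 1)"
      unfolding F9_def X_def using PP_lower[of 1 "9 * M - 1" 0 "9 * M" 1 "78 * M"] M1 by simp
    also have "PP 1 (9 * M - 1) = F9'" unfolding F9'_def using PP_fact[of 1 "9 * M - 1"] by simp
    finally show ?thesis .
  qed
  define Y0 where "Y0 = (F12 / (X ^ 0 * fact 2)) * (P3 * (F18 / (X ^ 2 * F9))) * (F66 / (X ^ 3 * F54))"
  have Y0pos: "Y0 > 0" unfolding Y0_def using pos Xpos by simp
  have Yge: "Y0 \<le> (\<Prod>y\<in>TT M - TB M. real_of_int \<bar>(12 * int M + 3) - y\<bar>)"
    unfolding YLB_eq[OF M1] Y0_def P3_def
    using p1 p2 p3 pos Xpos PP_nonneg by (intro mult_mono) (auto intro!: mult_nonneg_nonneg)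
  have p53: "(5/3::real) ^ (9 * M - 1) \<le> R5 / (3 * P3)"
  proof -
    have "(5/3::real) ^ (9 * M - 1) \<le> (5/3) ^ (9 * M)" by (rule power_increasing) auto
    also have "\<dots> = R5 / (3 * P3)" unfolding R5_def P3_def using three_pow_pred[of "9 * M"] M1 by (simp add: power_divide)
    finally show ?thesis .
  qed
  have "(78 * real M) ^ 42 * fact (42 * M) * (1 / (3 ^ (9 * M - 1) * fact (9 * M - 1)) * ((5/3) ^ (9 * M - 1) / (\<Prod>y\<in>TT M - TB M. real_of_int \<bar>(12 * int M + 3) - y\<bar>)))
      \<le> X ^ 42 * F42 * (1 / (P3 * (F9 / (X ^ 1 * fact 0))) * ((R5 / (3 * P3)) / Y0))"
    unfolding X_def[symmetric] F42_def[symmetric] P3_def[symmetric] F9'_def[symmetric]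
    using Y0pos Yge pos Xpos p4 p53
    by (intro mult_left_mono mult_mono divide_left_mono frac_le) (auto intro!: mult_pos_pos)
  also have "\<dots> = 18 * X ^ 48 * (F42 * F54 / (F12 * (F18 * F66))) * (R5 / (27 * (P3 * P3 * P3)))"
  proof -
    have X48: "X ^ 48 = X ^ 42 * X * X ^ 2 * X ^ 3"
    proof -
      have "X ^ 48 = X ^ (42 + 1 + 2 + 3)" by simp
      thus ?thesis by (simp only: power_add power_one_right)
    qed
    show ?thesis unfolding Y0_def X48 using pos Xpos by (simp add: field_simps)
  qed
  also have "27 * (P3 * P3 * P3) = (3::real) ^ (27 * M)"
  proof -
    have "27 * (P3 * P3 * P3) = (3 * P3) ^ 3" by (simp add: power3_eq_cube)
    also have "3 * P3 = (3::real) ^ (9 * M)" unfolding P3_def using three_pow_pred[of "9 * M"] M1 by simp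
    finally show ?thesis by (simp add: power_mult[symmetric] mult.commute)
  qed
  also have "R5 / (3::real) ^ (27 * M) = ((5::real) ^ 9 / 3 ^ 27) ^ M"
    unfolding R5_def by (simp add: power_divide power_mult)
  finally show ?thesis unfolding X_def F42_def F54_def F66_def F12_def F18_def by simp
qed

lemma termBR:
  assumes M1: "M \<ge> 1"
  shows "(78 * real M) ^ 42 * fact (42 * M) * (1 / (3 ^ (9 * M - 1) * fact (9 * M - 1)) * ((5/2) ^ (9 * M - 1) / (\<Prod>y\<in>TT M - TB M. real_of_int \<bar>(12 * int M + 3) + int 3 * int (9 * M - 1) - y\<bar>)))
    \<le> 9 * (78 * real M) ^ 44 * (prod_list (map (\<lambda>a. fact (a * M)) [42, 27, 27]) / prod_list (map (\<lambda>b. fact (b * M)) [9, 9, 39, 39])) * ((5::real) ^ 9 / (2 ^ 9 * 3 ^ 18)) ^ M"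
proof -
  define X where "X = 78 * real M"
  define F42 F27 F39 F9 F9' where "F42 = (fact (42 * M) :: real)" and "F27 = (fact (27 * M) :: real)"
    and "F39 = (fact (39 * M) :: real)" and "F9 = (fact (9 * M) :: real)" and "F9' = (fact (9 * M - 1) :: real)"
  define P3 where "P3 = (3::real) ^ (9 * M - 1)"
  define R5 where "R5 = (5::real) ^ (9 * M)"
  define T2 where "T2 = (2::real) ^ (9 * M)"
  have Xpos: "X > 0" using M1 by (simp add: X_def)
  have pos: "F42 > 0" "F27 > 0" "F39 > 0" "F9 > 0" "F9' > 0" "P3 > 0" "R5 > 0" "T2 > 0"
    by (simp_all add: F42_def F27_def F39_def F9_def F9'_def P3_def R5_def T2_def)
  have p1: "F39 / (X ^ 0 * F27) \<le> PP (27 * M) (39 * M)"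
    unfolding F39_def F27_def X_def using PP_lower[of "27 * M" "39 * M" "27 * M" "39 * M" 0 "78 * M"] M1 by simp
  have p2: "F9 / (X ^ 1 * fact 0) \<le> PP 1 (9 * M - 1)"
    unfolding F9_def X_def using PP_lower[of 1 "9 * M - 1" 0 "9 * M" 1 "78 * M"] M1 by simp
  have p4: "F9 / (X ^ 1 * fact 0) \<le> F9'"
  proof -
    have "PP 1 (9 * M - 1) = F9'" unfolding F9'_def using PP_fact[of 1 "9 * M - 1"] by simp
    thus ?thesis using p2 by simp
  qed
  define Y0 where "Y0 = (F39 / (X ^ 0 * F27)) * (P3 * (F9 / (X ^ 1 * fact 0))) * (F39 / (X ^ 0 * F27))"
  have Y0pos: "Y0 > 0" unfolding Y0_def using pos Xpos by simp
  have Yge: "Y0 \<le> (\<Prod>y\<in>TT M - TB M. real_of_int \<bar>(12 * int M + 3) + int 3 * int (9 * M - 1) - y\<bar>)"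
    unfolding YRB_eq[OF M1] Y0_def P3_def
    using p1 p2 pos Xpos PP_nonneg by (intro mult_mono) (auto intro!: mult_nonneg_nonneg)
  have p52: "(5/2::real) ^ (9 * M - 1) \<le> R5 / T2"
  proof -
    have "(5/2::real) ^ (9 * M - 1) \<le> (5/2) ^ (9 * M)" by (rule power_increasing) auto
    also have "\<dots> = R5 / T2" unfolding R5_def T2_def by (simp add: power_divide)
    finally show ?thesis .
  qed
  have "(78 * real M) ^ 42 * fact (42 * M) * (1 / (3 ^ (9 * M - 1) * fact (9 * M - 1)) * ((5/2) ^ (9 * M - 1) / (\<Prod>y\<in>TT M - TB M. real_of_int \<bar>(12 * int M + 3) + int 3 * int (9 * M - 1) - y\<bar>)))
      \<le> X ^ 42 * F42 * (1 / (P3 * (F9 / (X ^ 1 * fact 0))) * ((R5 / T2) / Y0))"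
    unfolding X_def[symmetric] F42_def[symmetric] P3_def[symmetric] F9'_def[symmetric]
    using Y0pos Yge pos Xpos p4 p52
    by (intro mult_left_mono mult_mono divide_left_mono frac_le) (auto intro!: mult_pos_pos)
  also have "\<dots> = 9 * X ^ 44 * (F42 * (F27 * F27) / (F9 * (F9 * (F39 * F39)))) * (R5 / (T2 * (9 * (P3 * P3))))"
  proof -
    have X44: "X ^ 44 = X ^ 42 * X * X" using power_Suc[of X 42] power_Suc[of X 43] by (simp add: algebra_simps)
    show ?thesis unfolding Y0_def X44 using pos Xpos by (simp add: field_simps)
  qed
  also have "9 * (P3 * P3) = (3::real) ^ (18 * M)"
  proof -
    have "9 * (P3 * P3) = (3 * P3) ^ 2" by (simp add: power2_eq_square)
    also have "3 * P3 = (3::real) ^ (9 * M)" unfolding P3_def using three_pow_pred[of "9 * M"] M1 by simp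
    finally show ?thesis by (simp add: power_mult[symmetric] mult.commute)
  qed
  also have "R5 / (T2 * (3::real) ^ (18 * M)) = ((5::real) ^ 9 / (2 ^ 9 * 3 ^ 18)) ^ M"
  proof -
    have "((5::real) ^ 9 / (2 ^ 9 * 3 ^ 18)) ^ M = (5 ^ 9) ^ M / ((2 ^ 9) ^ M * (3 ^ 18) ^ M)" by (simp only: power_divide power_mult_distrib)
    also have "\<dots> = 5 ^ (9 * M) / (2 ^ (9 * M) * 3 ^ (18 * M))" by (simp only: power_mult)
    finally show ?thesis unfolding R5_def T2_def ..
  qed
  finally show ?thesis unfolding X_def F42_def F27_def F39_def F9_def by simp
qed

lemma core_eventually:
  "eventually (\<lambda>M. (78 * real M) ^ 42 * fact (42 * M) * (\<Sum>x\<in>TT M. RR (TT M) x) \<le> 1/2) sequentially"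
proof -
  have e1: "eventually (\<lambda>M. 3 * (78 * real M) ^ 43 * (prod_list (map (\<lambda>a. fact (a * M)) [42, 4, 66]) / prod_list (map (\<lambda>b. fact (b * M)) [12, 22, 78])) * ((4::real) ^ 12 / 3 ^ 18) ^ M \<le> 1/16) sequentially"
    by (rule final_eventually[OF _ _ _ _ _ K_AL]) auto
  have e2: "eventually (\<lambda>M. 3 * (78 * real M) ^ 43 * (prod_list (map (\<lambda>a. fact (a * M)) [42, 54]) / prod_list (map (\<lambda>b. fact (b * M)) [12, 18, 66])) * ((4::real) ^ 12 / 3 ^ 30) ^ M \<le> 1/16) sequentially"
    by (rule final_eventually[OF _ _ _ _ _ K_AR]) auto
  have e3: "eventually (\<lambda>M. 18 * (78 * real M) ^ 48 * (prod_list (map (\<lambda>a. fact (a * M)) [42, 54]) / prod_list (map (\<lambda>b. fact (b * M)) [12, 18, 66])) * ((5::real) ^ 9 / 3 ^ 27) ^ M \<le> 1/16) sequentially"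
    by (rule final_eventually[OF _ _ _ _ _ K_BL]) auto
  have e4: "eventually (\<lambda>M. 9 * (78 * real M) ^ 44 * (prod_list (map (\<lambda>a. fact (a * M)) [42, 27, 27]) / prod_list (map (\<lambda>b. fact (b * M)) [9, 9, 39, 39])) * ((5::real) ^ 9 / (2 ^ 9 * 3 ^ 18)) ^ M \<le> 1/16) sequentially"
    by (rule final_eventually[OF _ _ _ _ _ K_BR]) auto
  have e5: "eventually (\<lambda>M::nat. M \<ge> 1) sequentially" by (rule eventually_ge_at_top)
  show ?thesis
  proof (rule eventually_mono[OF eventually_conj[OF e1 eventually_conj[OF e2 eventually_conj[OF e3 eventually_conj[OF e4 e5]]]]])
    fix M :: nat
    assume H: "3 * (78 * real M) ^ 43 * (prod_list (map (\<lambda>a. fact (a * M)) [42, 4, 66]) / prod_list (map (\<lambda>b. fact (b * M)) [12, 22, 78])) * ((4::real) ^ 12 / 3 ^ 18) ^ M \<le> 1/16 \<and>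
      3 * (78 * real M) ^ 43 * (prod_list (map (\<lambda>a. fact (a * M)) [42, 54]) / prod_list (map (\<lambda>b. fact (b * M)) [12, 18, 66])) * ((4::real) ^ 12 / 3 ^ 30) ^ M \<le> 1/16 \<and>
      18 * (78 * real M) ^ 48 * (prod_list (map (\<lambda>a. fact (a * M)) [42, 54]) / prod_list (map (\<lambda>b. fact (b * M)) [12, 18, 66])) * ((5::real) ^ 9 / 3 ^ 27) ^ M \<le> 1/16 \<and>
      9 * (78 * real M) ^ 44 * (prod_list (map (\<lambda>a. fact (a * M)) [42, 27, 27]) / prod_list (map (\<lambda>b. fact (b * M)) [9, 9, 39, 39])) * ((5::real) ^ 9 / (2 ^ 9 * 3 ^ 18)) ^ M \<le> 1/16 \<and> M \<ge> 1"
    hence M1: "M \<ge> 1" by simp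
    define W where "W = (78 * real M) ^ 42 * fact (42 * M)"
    have W0: "W \<ge> 0" unfolding W_def by simp
    define YLA YRA YLB YRB where
      "YLA = (\<Prod>y\<in>TT M - TA M. real_of_int \<bar>0 - y\<bar>)" and
      "YRA = (\<Prod>y\<in>TT M - TA M. real_of_int \<bar>12 * int M - y\<bar>)" and
      "YLB = (\<Prod>y\<in>TT M - TB M. real_of_int \<bar>(12 * int M + 3) - y\<bar>)" and
      "YRB = (\<Prod>y\<in>TT M - TB M. real_of_int \<bar>(12 * int M + 3) + int 3 * int (9 * M - 1) - y\<bar>)"
    have tAL: "W * (1 / fact (12 * M) * (4 ^ (12 * M) / YLA)) \<le> 1/16"
      using termAL[OF M1] H unfolding W_def YLA_def by linarith
    have tAR: "W * (1 / fact (12 * M) * ((4/3) ^ (12 * M) / YRA)) \<le> 1/16"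
      using termAR[OF M1] H unfolding W_def YRA_def by linarith
    have tBL: "W * (1 / (3 ^ (9 * M - 1) * fact (9 * M - 1)) * ((5/3) ^ (9 * M - 1) / YLB)) \<le> 1/16"
      using termBL[OF M1] H unfolding W_def YLB_def by linarith
    have tBR: "W * (1 / (3 ^ (9 * M - 1) * fact (9 * M - 1)) * ((5/2) ^ (9 * M - 1) / YRB)) \<le> 1/16"
      using termBR[OF M1] H unfolding W_def YRB_def by linarith
    have A: "W * (\<Sum>x\<in>TA M. RR (TT M) x) \<le> 1/8"
    proof -
      have "W * (\<Sum>x\<in>TA M. RR (TT M) x) \<le> W * (1 / fact (12 * M) * (4 ^ (12 * M) / YLA + (4/3) ^ (12 * M) / YRA))"
        using blockA_bound[OF M1] W0 unfolding YLA_def YRA_def by (intro mult_left_mono) auto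
      also have "\<dots> = W * (1 / fact (12 * M) * (4 ^ (12 * M) / YLA)) + W * (1 / fact (12 * M) * ((4/3) ^ (12 * M) / YRA))"
        by (simp add: algebra_simps add_divide_distrib)
      finally show ?thesis using tAL tAR by linarith
    qed
    have B: "W * (\<Sum>x\<in>TB M. RR (TT M) x) \<le> 1/8"
    proof -
      have "W * (\<Sum>x\<in>TB M. RR (TT M) x) \<le> W * (1 / (3 ^ (9 * M - 1) * fact (9 * M - 1)) * ((5/3) ^ (9 * M - 1) / YLB + (5/2) ^ (9 * M - 1) / YRB))"
        using blockB_bound[OF M1] W0 unfolding YLB_def YRB_def by (intro mult_left_mono) auto
      also have "\<dots> = W * (1 / (3 ^ (9 * M - 1) * fact (9 * M - 1)) * ((5/3) ^ (9 * M - 1) / YLB)) + W * (1 / (3 ^ (9 * M - 1) * fact (9 * M - 1)) * ((5/2) ^ (9 * M - 1) / YRB))"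
        by (simp add: algebra_simps add_divide_distrib)
      finally show ?thesis using tBL tBR by linarith
    qed
    have "W * (\<Sum>x\<in>TT M. RR (TT M) x) \<le> W * (2 * ((\<Sum>x\<in>TA M. RR (TT M) x) + (\<Sum>x\<in>TB M. RR (TT M) x)))"
      using TT_sym_sum[OF M1] W0 by (rule mult_left_mono)
    also have "\<dots> = 2 * (W * (\<Sum>x\<in>TA M. RR (TT M) x)) + 2 * (W * (\<Sum>x\<in>TB M. RR (TT M) x))"
      by (simp add: algebra_simps)
    finally show "(78 * real M) ^ 42 * fact (42 * M) * (\<Sum>x\<in>TT M. RR (TT M) x) \<le> 1/2"
      using A B unfolding W_def by linarith
  qed
qed

lemma prod_dist_nat_nat:
  assumes "p < s"
  shows "(\<Prod>q\<in>{..<s}-{p}. nat \<bar>int p - int q\<bar>) = fact p * fact (s - 1 - p)"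
proof -
  have "real (\<Prod>q\<in>{..<s}-{p}. nat \<bar>int p - int q\<bar>) = (\<Prod>q\<in>{..<s}-{p}. real (nat \<bar>int p - int q\<bar>))"
    by simp
  also have "\<dots> = fact p * fact (s - 1 - p)" by (rule prod_dist_nat[OF assms])
  also have "\<dots> = real (fact p * fact (s - 1 - p))" by simp
  finally show ?thesis by (simp only: of_nat_eq_iff)
qed

lemma fact_lead_int:
  fixes f :: "rat poly"
  assumes iv: "int_valued f" and dn: "degree f = n"
  shows "of_nat (fact n) * coeff f n \<in> \<int>"
proof -
  define X where "X = (of_nat :: nat \<Rightarrow> rat) ` {..<n+1}"
  have injX: "inj_on (of_nat :: nat \<Rightarrow> rat) {..<n+1}" by (auto simp: inj_on_def)
  have cX: "card X = Suc n" unfolding X_def using card_image[OF injX] by simp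
  have L: "coeff f n = (\<Sum>x\<in>X. poly f x / (\<Prod>y\<in>X-{x}. (x - y)))"
    by (rule lagrange_coeff) (use cX dn in \<open>auto simp: X_def\<close>)
  have "coeff f n = (\<Sum>i\<in>{..<n+1}. poly f (of_nat i) / (\<Prod>y\<in>X-{of_nat i}. (of_nat i - y)))"
    unfolding L X_def by (rule sum.reindex[OF injX, unfolded o_def])
  also have "\<dots> = (\<Sum>i\<in>{..<n+1}. poly f (of_nat i) / (\<Prod>j\<in>{..<n+1}-{i}. (of_nat i - of_nat j)))"
  proof (intro sum.cong refl)
    fix i assume i: "i \<in> {..<n+1}"
    have "X - {of_nat i} = (of_nat :: nat \<Rightarrow> rat) ` ({..<n+1} - {i})" unfolding X_def by auto
    moreover have "inj_on (of_nat :: nat \<Rightarrow> rat) ({..<n+1} - {i})" by (auto simp: inj_on_def)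
    ultimately have "(\<Prod>y\<in>X-{of_nat i}. (of_nat i - y)) = (\<Prod>j\<in>{..<n+1}-{i}. (of_nat i - of_nat j :: rat))"
      by (simp add: prod.reindex)
    thus "poly f (of_nat i) / (\<Prod>y\<in>X-{of_nat i}. (of_nat i - y)) = poly f (of_nat i) / (\<Prod>j\<in>{..<n+1}-{i}. (of_nat i - of_nat j))"
      by simp
  qed
  finally have L2: "coeff f n = (\<Sum>i\<in>{..<n+1}. poly f (of_nat i) / (\<Prod>j\<in>{..<n+1}-{i}. (of_nat i - of_nat j :: rat)))" .
  have trm: "of_nat (fact n) * (poly f (of_nat i) / (\<Prod>j\<in>{..<n+1}-{i}. (of_nat i - of_nat j :: rat))) \<in> \<int>"
    if i: "i \<in> {..<n+1}" for i
  proof -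
    define P where "P = (\<Prod>j\<in>{..<n+1}-{i}. (of_nat i - of_nat j :: rat))"
    have ilt: "i < n + 1" using i by simp
    have "\<bar>P\<bar> = (\<Prod>j\<in>{..<n+1}-{i}. \<bar>of_nat i - of_nat j :: rat\<bar>)" unfolding P_def by (rule abs_prod)
    also have "\<dots> = (\<Prod>j\<in>{..<n+1}-{i}. of_nat (nat \<bar>int i - int j\<bar>))"
      by (intro prod.cong refl) (simp add: of_nat_nat)
    also have "\<dots> = of_nat (\<Prod>j\<in>{..<n+1}-{i}. nat \<bar>int i - int j\<bar>)" by simp
    also have "\<dots> = of_nat (fact i * fact (n - i))" using prod_dist_nat_nat[OF ilt] by simp
    finally have absP: "\<bar>P\<bar> = of_nat (fact i * fact (n - i))" .
    have bin: "(of_nat (fact n) :: rat) / of_nat (fact i * fact (n - i)) \<in> \<int>"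
    proof -
      have "(of_nat (fact n) :: rat) / of_nat (fact i * fact (n - i)) = of_nat (n choose i)"
      proof -
        have "i \<le> n" using ilt by simp
        from binomial_fact[OF this, where 'a = rat] show ?thesis by (simp add: of_nat_mult)
      qed
      thus ?thesis by simp
    qed
    have pv: "poly f (of_nat i) \<in> \<int>" using iv unfolding int_valued_def by (metis of_int_of_nat_eq)
    have "of_nat (fact n) / P \<in> \<int>"
    proof (cases "P \<ge> 0")
      case True
      hence "P = of_nat (fact i * fact (n - i))" using absP by simp
      thus ?thesis using bin by simp
    next
      case False
      hence "P = - of_nat (fact i * fact (n - i))" using absP by simp
      thus ?thesis using bin by (simp add: Ints_minus)
    qed
    hence "poly f (of_nat i) * (of_nat (fact n) / P) \<in> \<int>" using pv by (rule Ints_mult[rotated])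
    thus ?thesis unfolding P_def by (simp add: field_simps)
  qed
  have "of_nat (fact n) * coeff f n = (\<Sum>i\<in>{..<n+1}. of_nat (fact n) * (poly f (of_nat i) / (\<Prod>j\<in>{..<n+1}-{i}. (of_nat i - of_nat j :: rat))))"
    unfolding L2 by (rule sum_distrib_left)
  also have "\<dots> \<in> \<int>" by (rule Ints_sum) (rule trm)
  finally show ?thesis .
qed

lemma c_const_ge: "c_const \<ge> 13/7"
proof -
  define g where "g t = t * (2 * ln t + 1/2)" for t :: real
  define c0 where "c0 = 2 * ln (2::real) - 1/2"
  note lb = ln_primes_bounds
  have g1: "g 1 \<le> c0" unfolding g_def c0_def using lb by simp
  have l76: "ln (7/6::real) = ln 7 - ln 2 - ln 3"
    using ln_divide_pos[of 7 6] ln_comp(25) by simp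
  have g76: "c0 \<le> g (7/6)" unfolding g_def c0_def l76 using lb by simp
  have cont: "continuous_on {1..7/6} g" unfolding g_def by (intro continuous_intros) auto
  obtain t where t: "1 \<le> t" "t \<le> 7/6" "g t = c0" using IVT'[of g 1 c0 "7/6", OF g1 g76 _ cont] by auto
  have ge1: "s \<ge> 1" if "s > 0" "g s = c0" for s
  proof (rule ccontr)
    assume "\<not> s \<ge> 1"
    hence "ln s < 0" using that(1) by simp
    hence "g s \<le> s * (1/2)" unfolding g_def using that(1) by (intro mult_left_mono) auto
    also have "\<dots> < 1/2" using \<open>\<not> s \<ge> 1\<close> by simp
    also have "1/2 < c0" unfolding c0_def using lb by simp
    finally show False using that(2) by simp
  qed
  have mono: "g a < g b" if "1 \<le> a" "a < b" for a b
  proof -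
    have "ln a \<le> ln b" using that by simp
    moreover have "ln a \<ge> 0" using that by simp
    ultimately show ?thesis unfolding g_def using that by (intro mult_strict_mono) auto
  qed
  have uniq: "s = t" if "s > 0" "g s = c0" for s
  proof -
    have s1: "s \<ge> 1" by (rule ge1[OF that])
    show ?thesis
    proof (rule ccontr)
      assume "s \<noteq> t"
      hence "s < t \<or> t < s" by auto
      thus False using mono[OF s1] mono[OF t(1)] t(3) that(2) by force
    qed
  qed
  have "t_const = t"
    unfolding t_const_def
  proof (rule the1_equality)
    show "\<exists>!x::real. x > 0 \<and> x * (2 * ln x + 1/2) = 2 * ln 2 - 1/2"
      using t uniq unfolding g_def c0_def by (intro ex1I[of _ t]) auto
    show "t > 0 \<and> t * (2 * ln t + 1/2) = 2 * ln 2 - 1/2" using t unfolding g_def c0_def by auto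
  qed
  hence "t_const \<le> 7/6" "t_const > 0" using t by auto
  hence "1 / t_const \<ge> 6/7" by (simp add: field_simps)
  thus ?thesis unfolding c_const_def by simp
qed

lemma mono_gap:
  fixes ys :: "int list"
  assumes s: "sorted_wrt (<) ys" and l: "i + d < length ys"
  shows "int d \<le> ys ! (i + d) - ys ! i"
  using l
proof (induction d)
  case 0 then show ?case by simp
next
  case (Suc d)
  have "ys ! (i + d) < ys ! (i + Suc d)" using sorted_wrt_nth_less[OF s, of "i + d" "i + Suc d"] Suc.prems by simp
  moreover have "int d \<le> ys ! (i + d) - ys ! i" using Suc by simp
  ultimately show ?case by simp
qed

lemma mono_gap_abs:
  fixes ys :: "int list"
  assumes s: "sorted_wrt (<) ys" and "i < length ys" "j < length ys"
  shows "\<bar>int i - int j\<bar> \<le> \<bar>ys ! i - ys ! j\<bar>"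
proof (cases "i \<le> j")
  case True
  from mono_gap[OF s, of i "j - i"] assms True show ?thesis by simp
next
  case False
  from mono_gap[OF s, of j "i - j"] assms False show ?thesis by simp
qed

lemma trivial_bound:
  fixes f :: "rat poly"
  assumes "degree f \<ge> 1"
  shows "card {m::int. \<bar>poly f (of_int m)\<bar> = 1} \<le> 2 * degree f"
proof -
  define p where "p = (f - 1) * (f + 1)"
  have f1: "f - 1 \<noteq> 0"
  proof
    assume "f - 1 = 0" hence "f = 1" by simp
    thus False using assms by simp
  qed
  have f2: "f + 1 \<noteq> 0"
  proof
    assume "f + 1 = 0" hence "f = - 1" by (simp add: eq_neg_iff_add_eq_0)
    thus False using assms by simp
  qed
  have pnz: "p \<noteq> 0" unfolding p_def using f1 f2 by simp
  have sub: "of_int ` {m::int. \<bar>poly f (of_int m)\<bar> = 1} \<subseteq> {x::rat. poly p x = 0}"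
    unfolding p_def by (auto simp: abs_eq_iff)
  have "card {m::int. \<bar>poly f (of_int m)\<bar> = 1} = card (of_int ` {m::int. \<bar>poly f (of_int m)\<bar> = 1} :: rat set)"
    by (rule card_image[symmetric]) (auto simp: inj_on_def)
  also have "\<dots> \<le> card {x::rat. poly p x = 0}" by (rule card_mono[OF poly_roots_finite[OF pnz] sub])
  also have "\<dots> \<le> degree p" by (rule card_poly_roots_bound[OF pnz])
  also have "\<dots> \<le> degree (f - 1) + degree (f + 1)" unfolding p_def by (rule degree_mult_le)
  also have "degree (f - 1) \<le> degree f" by (rule degree_diff_le) simp_all
  also have "degree (f + 1) \<le> degree f" by (rule degree_add_le) simp_all
  finally show ?thesis by simp
qed

lemma of_rat_abs': "real_of_rat \<bar>x\<bar> = \<bar>real_of_rat x\<bar>"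
  by (cases "x \<ge> 0") (auto simp: of_rat_less_eq of_rat_minus)

lemma RR_sub_bound:
  fixes T' T :: "int set" and K :: real
  assumes fin: "finite T" and sub: "T' \<subseteq> T" and k: "k \<in> T'"
    and dist: "\<And>l. l \<in> T \<Longrightarrow> real_of_int \<bar>k - l\<bar> \<le> K" and K1: "K \<ge> 1" and cd: "card (T - T') \<le> j"
  shows "RR T' k \<le> K ^ j * RR T k"
proof -
  have finT': "finite T'" using fin sub by (rule finite_subset[rotated])
  have split: "T - {k} = (T' - {k}) \<union> (T - T')" using sub k by auto
  have P1: "(\<Prod>l\<in>T-{k}. real_of_int \<bar>k - l\<bar>) = (\<Prod>l\<in>T'-{k}. real_of_int \<bar>k - l\<bar>) * (\<Prod>l\<in>T-T'. real_of_int \<bar>k - l\<bar>)"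
    unfolding split by (rule prod.union_disjoint) (use fin finT' in auto)
  have P2: "(\<Prod>l\<in>T-T'. real_of_int \<bar>k - l\<bar>) \<le> K ^ j"
    by (rule prod_le_power) (use dist cd K1 in auto)
  have pos1: "(\<Prod>l\<in>T'-{k}. real_of_int \<bar>k - l\<bar>) > 0" by (rule prod_pos) auto
  have pos2: "(\<Prod>l\<in>T-{k}. real_of_int \<bar>k - l\<bar>) > 0" by (rule prod_pos) auto
  have "(\<Prod>l\<in>T-{k}. real_of_int \<bar>k - l\<bar>) \<le> (\<Prod>l\<in>T'-{k}. real_of_int \<bar>k - l\<bar>) * K ^ j"
    unfolding P1 using P2 pos1 by (intro mult_left_mono) auto
  hence "1 / (\<Prod>l\<in>T'-{k}. real_of_int \<bar>k - l\<bar>) \<le> K ^ j / (\<Prod>l\<in>T-{k}. real_of_int \<bar>k - l\<bar>)"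
    using pos1 pos2 by (simp add: field_simps)
  thus ?thesis unfolding RR_def by simp
qed

lemma big_n_bound:
  obtains N0 where "\<And>f n. int_valued f \<Longrightarrow> degree f = n \<Longrightarrow> n \<ge> N0 \<Longrightarrow>
      card {m::int. \<bar>poly f (of_int m)\<bar> = 1} \<le> 78 * (n div 42 + 1)"
proof -
  obtain M0 where HM: "\<And>M. M \<ge> M0 \<Longrightarrow> (78 * real M) ^ 42 * fact (42 * M) * (\<Sum>x\<in>TT M. RR (TT M) x) \<le> 1/2"
    using core_eventually unfolding eventually_sequentially by blast
  have main: "card {m::int. \<bar>poly f (of_int m)\<bar> = 1} \<le> 78 * (n div 42 + 1)"
    if iv: "int_valued f" and dn: "degree f = n" and nN: "n \<ge> 42 * M0 + 42" for f n
  proof (rule ccontr)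
    define M where "M = n div 42 + 1"
    define S where "S = {m::int. \<bar>poly f (of_int m)\<bar> = 1}"
    assume "\<not> card {m::int. \<bar>poly f (of_int m)\<bar> = 1} \<le> 78 * (n div 42 + 1)"
    hence cS: "card S > 78 * M" unfolding S_def M_def by simp
    have M1: "M \<ge> 1" and MM0: "M \<ge> M0" using nN by (auto simp: M_def)
    have n42: "n + 1 \<le> 42 * M + 1" "42 * M - n \<le> 42" unfolding M_def by auto
    have n1: "n \<ge> 1" using nN by simp
    have finS: "finite S" using cS card.infinite by fastforce
    define ys where "ys = sorted_list_of_set S"
    have lys: "length ys = card S" unfolding ys_def by simp
    have sys: "set ys = S" unfolding ys_def using finS by simp
    have sw: "sorted_wrt (<) ys" unfolding ys_def by (rule strict_sorted_list_of_set)
    define Y where "Y k = ys ! nat k" for k :: int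
    have TTrange: "0 \<le> k \<and> k \<le> 78 * int M" if "k \<in> TT M" for k using that unfolding mem_TT by simp
    have klen: "nat k < length ys" if "k \<in> TT M" for k using TTrange[OF that] cS lys by linarith
    have YS: "Y k \<in> S" if "k \<in> TT M" for k
      unfolding Y_def using klen[OF that] sys nth_mem by blast
    have Ygap: "\<bar>k - l\<bar> \<le> \<bar>Y k - Y l\<bar>" if "k \<in> TT M" "l \<in> TT M" for k l
    proof -
      have "\<bar>int (nat k) - int (nat l)\<bar> \<le> \<bar>ys ! nat k - ys ! nat l\<bar>"
        by (rule mono_gap_abs[OF sw klen[OF that(1)] klen[OF that(2)]])
      thus ?thesis unfolding Y_def using TTrange[OF that(1)] TTrange[OF that(2)] by simp
    qed
    have cTT: "card (TT M) = 42 * M + 1" by (rule TT_card[OF M1])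
    obtain T' where T': "T' \<subseteq> TT M" "card T' = n + 1" "finite T'"
      using obtain_subset_with_card_n[of "n + 1" "TT M"] cTT n42(1) by auto
    define g where "g k = (rat_of_int (Y k))" for k
    have injg: "inj_on g T'"
    proof (rule inj_onI)
      fix k l assume kl: "k \<in> T'" "l \<in> T'" "g k = g l"
      hence "Y k = Y l" unfolding g_def by simp
      hence "\<bar>k - l\<bar> \<le> 0" using Ygap[of k l] kl T'(1) by auto
      thus "k = l" by simp
    qed
    define X where "X = g ` T'"
    have cX: "card X = Suc n" unfolding X_def using card_image[OF injg] T'(2) by simp
    have L: "coeff f n = (\<Sum>x\<in>X. poly f x / (\<Prod>y\<in>X-{x}. (x - y)))"
      by (rule lagrange_coeff) (use cX dn T'(3) in \<open>auto simp: X_def\<close>)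
    also have "\<dots> = (\<Sum>k\<in>T'. poly f (g k) / (\<Prod>l\<in>T'-{k}. (g k - g l)))"
    proof -
      have "(\<Sum>x\<in>X. poly f x / (\<Prod>y\<in>X-{x}. (x - y))) = (\<Sum>k\<in>T'. poly f (g k) / (\<Prod>y\<in>X-{g k}. (g k - y)))"
        unfolding X_def by (rule sum.reindex[OF injg, unfolded o_def])
      also have "\<dots> = (\<Sum>k\<in>T'. poly f (g k) / (\<Prod>l\<in>T'-{k}. (g k - g l)))"
      proof (intro sum.cong refl)
        fix k assume k: "k \<in> T'"
        have "X - {g k} = g ` (T' - {k})" unfolding X_def using injg k by (auto simp: inj_on_def)
        moreover have "inj_on g (T' - {k})" using injg by (rule inj_on_subset) auto
        ultimately show "poly f (g k) / (\<Prod>y\<in>X-{g k}. (g k - y)) = poly f (g k) / (\<Prod>l\<in>T'-{k}. (g k - g l))"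
          by (simp add: prod.reindex)
      qed
      finally show ?thesis .
    qed
    finally have L2: "coeff f n = (\<Sum>k\<in>T'. poly f (g k) / (\<Prod>l\<in>T'-{k}. (g k - g l)))" .
    have absb: "\<bar>coeff f n\<bar> \<le> (\<Sum>k\<in>T'. 1 / (\<Prod>l\<in>T'-{k}. rat_of_int \<bar>Y k - Y l\<bar>))"
    proof -
      have "\<bar>coeff f n\<bar> \<le> (\<Sum>k\<in>T'. \<bar>poly f (g k) / (\<Prod>l\<in>T'-{k}. (g k - g l))\<bar>)"
        unfolding L2 by (rule sum_abs)
      also have "\<dots> = (\<Sum>k\<in>T'. 1 / (\<Prod>l\<in>T'-{k}. rat_of_int \<bar>Y k - Y l\<bar>))"
      proof (intro sum.cong refl)
        fix k assume k: "k \<in> T'"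
        have "\<bar>poly f (g k)\<bar> = 1" using YS[of k] k T'(1) unfolding S_def g_def by auto
        moreover have "\<bar>(\<Prod>l\<in>T'-{k}. (g k - g l))\<bar> = (\<Prod>l\<in>T'-{k}. rat_of_int \<bar>Y k - Y l\<bar>)"
          unfolding abs_prod g_def by (intro prod.cong refl) simp
        ultimately show "\<bar>poly f (g k) / (\<Prod>l\<in>T'-{k}. (g k - g l))\<bar> = 1 / (\<Prod>l\<in>T'-{k}. rat_of_int \<bar>Y k - Y l\<bar>)"
          by (simp add: abs_divide)
      qed
      finally show ?thesis .
    qed
    have realb: "real_of_rat \<bar>coeff f n\<bar> \<le> (\<Sum>k\<in>T'. RR T' k)"
    proof -
      have "real_of_rat \<bar>coeff f n\<bar> \<le> real_of_rat (\<Sum>k\<in>T'. 1 / (\<Prod>l\<in>T'-{k}. rat_of_int \<bar>Y k - Y l\<bar>))"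
        using absb by (simp add: of_rat_less_eq)
      also have "\<dots> = (\<Sum>k\<in>T'. 1 / (\<Prod>l\<in>T'-{k}. real_of_int \<bar>Y k - Y l\<bar>))"
        by (simp add: of_rat_sum of_rat_divide of_rat_prod of_rat_abs' of_rat_diff)
      also have "\<dots> \<le> (\<Sum>k\<in>T'. RR T' k)"
      proof (rule sum_mono)
        fix k assume k: "k \<in> T'"
        have le: "(\<Prod>l\<in>T'-{k}. real_of_int \<bar>k - l\<bar>) \<le> (\<Prod>l\<in>T'-{k}. real_of_int \<bar>Y k - Y l\<bar>)"
        proof (rule prod_mono)
          fix l assume l: "l \<in> T' - {k}"
          have "\<bar>k - l\<bar> \<le> \<bar>Y k - Y l\<bar>" using Ygap k l T'(1) by auto
          hence "real_of_int \<bar>k - l\<bar> \<le> real_of_int \<bar>Y k - Y l\<bar>" by (simp only: of_int_le_iff)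
          thus "0 \<le> real_of_int \<bar>k - l\<bar> \<and> real_of_int \<bar>k - l\<bar> \<le> real_of_int \<bar>Y k - Y l\<bar>" by simp
        qed
        have pos: "(\<Prod>l\<in>T'-{k}. real_of_int \<bar>k - l\<bar>) > 0" by (rule prod_pos) auto
        show "1 / (\<Prod>l\<in>T'-{k}. real_of_int \<bar>Y k - Y l\<bar>) \<le> RR T' k"
          unfolding RR_def using le pos by (intro divide_left_mono) auto
      qed
      finally show ?thesis .
    qed
    have sumb: "(\<Sum>k\<in>T'. RR T' k) \<le> (78 * real M) ^ 42 * (\<Sum>k\<in>TT M. RR (TT M) k)"
    proof -
      have "(\<Sum>k\<in>T'. RR T' k) \<le> (\<Sum>k\<in>T'. (78 * real M) ^ 42 * RR (TT M) k)"
      proof (rule sum_mono)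
        fix k assume k: "k \<in> T'"
        show "RR T' k \<le> (78 * real M) ^ 42 * RR (TT M) k"
        proof (rule RR_sub_bound[OF TT_finite T'(1) k])
          fix l assume l: "l \<in> TT M"
          have kk: "0 \<le> k" "k \<le> 78 * int M" using TTrange[of k] k T'(1) by auto
          have ll: "0 \<le> l" "l \<le> 78 * int M" using TTrange[OF l] by auto
          have "\<bar>k - l\<bar> \<le> 78 * int M" using kk ll by auto
          hence "real_of_int \<bar>k - l\<bar> \<le> real_of_int (78 * int M)" by (simp only: of_int_le_iff)
          thus "real_of_int \<bar>k - l\<bar> \<le> 78 * real M" by simp
        next
          show "78 * real M \<ge> 1" using M1 by simp
        next
          have "card (TT M - T') = card (TT M) - card T'" using T' TT_finite by (simp add: card_Diff_subset)
          thus "card (TT M - T') \<le> 42" using cTT T'(2) n42 by simp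
        qed
      qed
      also have "\<dots> = (78 * real M) ^ 42 * (\<Sum>k\<in>T'. RR (TT M) k)" by (simp add: sum_distrib_left)
      also have "\<dots> \<le> (78 * real M) ^ 42 * (\<Sum>k\<in>TT M. RR (TT M) k)"
        by (intro mult_left_mono sum_mono2[OF TT_finite T'(1)]) (auto simp: RR_nonneg)
      finally show ?thesis .
    qed
    have fn: "(fact n :: real) \<le> fact (42 * M)" by (rule fact_mono) (use n42 in simp)
    have "real (fact n) * real_of_rat \<bar>coeff f n\<bar> \<le> fact (42 * M) * ((78 * real M) ^ 42 * (\<Sum>k\<in>TT M. RR (TT M) k))"
      using fn realb sumb by (intro mult_mono) (auto simp: sum_nonneg RR_nonneg)
    also have "\<dots> \<le> 1/2" using HM[OF MM0] by (simp add: algebra_simps)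
    finally have small: "real (fact n) * real_of_rat \<bar>coeff f n\<bar> \<le> 1/2" .
    have zI: "of_nat (fact n) * coeff f n \<in> \<int>" by (rule fact_lead_int[OF iv dn])
    have cnz: "coeff f n \<noteq> 0"
    proof -
      have "f \<noteq> 0" using dn n1 by auto
      hence "lead_coeff f \<noteq> 0" by simp
      thus ?thesis using dn by simp
    qed
    hence "of_nat (fact n) * coeff f n \<noteq> 0" by simp
    from Ints_nonzero_abs_ge1[OF zI this] have "1 \<le> \<bar>of_nat (fact n) * coeff f n\<bar>" .
    hence "1 \<le> real_of_rat \<bar>of_nat (fact n) * coeff f n\<bar>" by (simp add: of_rat_less_eq[symmetric])
    also have "real_of_rat \<bar>of_nat (fact n) * coeff f n\<bar> = real (fact n) * real_of_rat \<bar>coeff f n\<bar>"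
    proof -
      have "real_of_rat (of_nat (fact n)) = real (fact n)" by (rule of_rat_of_nat_eq)
      thus ?thesis by (simp only: abs_mult of_rat_mult abs_of_nat)
    qed
    finally show False using small by simp
  qed
  show ?thesis by (rule that[OF main]) auto
qed

theorem mainTheorem3:
  shows "\<exists>\<epsilon> :: nat \<Rightarrow> real. \<epsilon> \<in> o(\<lambda>n. real n) \<and>
    (\<forall>f :: rat poly. int_valued f \<longrightarrow> degree f \<ge> 1 \<longrightarrow>
       real (E f) \<le> c_const * real (degree f) + \<epsilon> (degree f))"
proof -
  obtain N0 where N0: "\<And>f n. int_valued f \<Longrightarrow> degree f = n \<Longrightarrow> n \<ge> N0 \<Longrightarrow>
      card {m::int. \<bar>poly f (of_int m)\<bar> = 1} \<le> 78 * (n div 42 + 1)"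
    using big_n_bound by blast
  define eps where "eps n = (if n \<ge> N0 then 78 else 2 * real n)" for n :: nat
  have c: "c_const \<ge> 13/7" by (rule c_const_ge)
  have o1: "(\<lambda>n::nat. 78::real) \<in> o(\<lambda>n. real n)" by real_asymp
  have ev: "eventually (\<lambda>n. eps n = 78) sequentially"
    unfolding eps_def eventually_sequentially by (intro exI[of _ N0]) auto
  have o2: "eps \<in> o(\<lambda>n. real n)"
    using landau_o.small.in_cong[OF ev] o1 by simp
  have bound: "real (E f) \<le> c_const * real (degree f) + eps (degree f)"
    if iv: "int_valued f" and d1: "degree f \<ge> 1" for f
  proof (cases "degree f \<ge> N0")
    case True
    define n where "n = degree f"
    have "E f \<le> 78 * (n div 42 + 1)" unfolding E_def n_def by (rule N0[OF iv refl True])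
    hence "real (E f) \<le> 78 * real (n div 42) + 78" by simp
    also have "real (n div 42) \<le> real n / 42"
    proof -
      have "42 * (n div 42) \<le> n" by simp
      hence "real (42 * (n div 42)) \<le> real n" by (simp only: of_nat_le_iff)
      thus ?thesis by simp
    qed
    hence "78 * real (n div 42) + 78 \<le> 78 * (real n / 42) + 78" by simp
    also have "78 * (real n / 42) = 13/7 * real n" by simp
    also have "13/7 * real n \<le> c_const * real n" using c by (intro mult_right_mono) auto
    finally show ?thesis using True unfolding eps_def n_def by simp
  next
    case False
    have "E f \<le> 2 * degree f" unfolding E_def by (rule trivial_bound[OF d1])
    moreover have "c_const * real (degree f) \<ge> 0" using c by simp
    ultimately show ?thesis using False unfolding eps_def by simp
  qed
  show ?thesis using o2 bound by blast
qed

end
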